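(* Let $(G_1,\prec_1),(G_2,\prec_2),(G_1',\prec_1'),(G_2',\prec_2')$ be POP-graphs such that the compositions below are defined and $(G_2,\prec_2)\circ(G_1,\prec_1)=(G_2',\prec_2')\circ(G_1',\prec_1')$. Then $(G_1,\prec_1)=(G_1',\prec_1')$ implies $(G_2,\prec_2)=(G_2',\prec_2')$, and $(G_2,\prec_2)=(G_2',\prec_2')$ implies $(G_1,\prec_1)=(G_1',\prec_1')$.
   Context: A progressive graph is a finite directed acyclic graph (parallel edges allowed) in which every source and every sink has degree one; degree-one vertices are boundary vertices. An input edge is an edge whose initial vertex is a boundary vertex; an output edge one whose terminal vertex is a boundary vertex. For edges write $e\to e'$ if $e\neq e'$ and there is a directed path whose first edge is $e$ and last edge is $e'$. A planar order on $G$ is a linear order $\prec$ on $E(G)$ such that (P1) $e_1\to e_2$ implies $e_1\prec e_2$; (P2) if $e_1\prec e_2\prec e_3$ and $e_1\to e_3$ then $e_1\to e_2$ or $e_2\to e_3$. A POP-graph is a progressive graph with a planar order. Equality of POP-graphs means isomorphism: bijections of vertices and of edges preserving incidence and direction of edges and the planar orders. Composition: let $(G_1,\prec_1)$, $(G_2,\prec_2)$ be POP-graphs, $G_1$ with output edges $o_1\prec_1\cdots\prec_1 o_n$ and $G_2$ with input edges $i_1\prec_2\cdots\prec_2 i_n$. The progressive graph $G_2\circ G_1$ is obtained from $G_1\sqcup G_2$ by deleting the sinks of $G_1$, the sources of $G_2$ and the edges $o_k,i_k$, and adding for each $k$ a new edge $\overline{e_k}$ from the initial vertex of $o_k$ to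 the terminal vertex of $i_k$. Let $Q_1=\{e\in E(G_1): e\prec_1 o_1\}$, $Q_k=\{e: o_{k-1}\prec_1 e\prec_1 o_k\}$ ($2\le k\le n$), $P_k=\{e\in E(G_2): i_k\prec_2 e\prec_2 i_{k+1}\}$ ($1\le k\le n-1$), $P_n=\{e: i_n\prec_2 e\}$. The order $\prec_2\circ\prec_1$ on $E(G_2\circ G_1)$ lists $Q_1,\{\overline{e_1}\},P_1,\dots,Q_n,\{\overline{e_n}\},P_n$ consecutively, each $Q_k$ ordered by $\prec_1$ and each $P_k$ by $\prec_2$; $(G_2,\prec_2)\circ(G_1,\prec_1):=(G_2\circ G_1,\prec_2\circ\prec_1)$. *)

theory Defs
  imports Main
begin

record ('v, 'e) pop =
  pverts :: "'v set"
  pedges :: "'e set"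
  psrc   :: "'e \<Rightarrow> 'v"
  ptgt   :: "'e \<Rightarrow> 'v"
  pprec  :: "'e \<Rightarrow> 'e \<Rightarrow> bool"

definition indeg :: "('v, 'e) pop \<Rightarrow> 'v \<Rightarrow> nat" where
  "indeg G v = card {e \<in> pedges G. ptgt G e = v}"

definition outdeg :: "('v, 'e) pop \<Rightarrow> 'v \<Rightarrow> nat" where
  "outdeg G v = card {e \<in> pedges G. psrc G e = v}"

definition degree :: "('v, 'e) pop \<Rightarrow> 'v \<Rightarrow> nat" where
  "degree G v = indeg G v + outdeg G v"

definition edge_step :: "('v, 'e) pop \<Rightarrow> ('e \<times> 'e) set" where
  "edge_step G = {(e, e'). e \<in> pedges G \<and> e' \<in> pedges G \<and> ptgt G e = psrc G e'}"

definition reach :: "('v, 'e) pop \<Rightarrow> 'e \<Rightarrow> 'e \<Rightarrow> bool" where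
  "reach G e e' \<longleftrightarrow> e \<noteq> e' \<and> (e, e') \<in> (edge_step G)\<^sup>+"

definition progressive :: "('v, 'e) pop \<Rightarrow> bool" where
  "progressive G \<longleftrightarrow>
     finite (pverts G) \<and> finite (pedges G) \<and>
     (\<forall>e \<in> pedges G. psrc G e \<in> pverts G \<and> ptgt G e \<in> pverts G) \<and>
     \<comment> \<open>acyclic: no directed cycle\<close>
     (\<forall>e \<in> pedges G. (e, e) \<notin> (edge_step G)\<^sup>+) \<and>
     \<comment> \<open>every source and every sink has degree one\<close>
     (\<forall>v \<in> pverts G. indeg G v = 0 \<longrightarrow> degree G v = 1) \<and>
     (\<forall>v \<in> pverts G. outdeg G v = 0 \<longrightarrow> degree G v = 1)"

definition boundary :: "('v, 'e) pop \<Rightarrow> 'v \<Rightarrow> bool" where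
  "boundary G v \<longleftrightarrow> v \<in> pverts G \<and> degree G v = 1"

definition inputs :: "('v, 'e) pop \<Rightarrow> 'e set" where
  "inputs G = {e \<in> pedges G. boundary G (psrc G e)}"

definition outputs :: "('v, 'e) pop \<Rightarrow> 'e set" where
  "outputs G = {e \<in> pedges G. boundary G (ptgt G e)}"

definition sources :: "('v, 'e) pop \<Rightarrow> 'v set" where
  "sources G = {v \<in> pverts G. indeg G v = 0}"

definition sinks :: "('v, 'e) pop \<Rightarrow> 'v set" where
  "sinks G = {v \<in> pverts G. outdeg G v = 0}"

definition planar_order :: "('v, 'e) pop \<Rightarrow> bool" where
  "planar_order G \<longleftrightarrow>
     (\<forall>e \<in> pedges G. \<not> pprec G e e) \<and>
     (\<forall>e1 \<in> pedges G. \<forall>e2 \<in> pedges G. \<forall>e3 \<in> pedges G.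
        pprec G e1 e2 \<longrightarrow> pprec G e2 e3 \<longrightarrow> pprec G e1 e3) \<and>
     (\<forall>e1 \<in> pedges G. \<forall>e2 \<in> pedges G. e1 \<noteq> e2 \<longrightarrow> pprec G e1 e2 \<or> pprec G e2 e1) \<and>
     (\<forall>e1 \<in> pedges G. \<forall>e2 \<in> pedges G. reach G e1 e2 \<longrightarrow> pprec G e1 e2) \<and>
     (\<forall>e1 \<in> pedges G. \<forall>e2 \<in> pedges G. \<forall>e3 \<in> pedges G.
        pprec G e1 e2 \<longrightarrow> pprec G e2 e3 \<longrightarrow> reach G e1 e3 \<longrightarrow>
        reach G e1 e2 \<or> reach G e2 e3)"

definition pop_graph :: "('v, 'e) pop \<Rightarrow> bool" where
  "pop_graph G \<longleftrightarrow> progressive G \<and> planar_order G"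

text \<open>Equality of POP-graphs = isomorphism (incidence, direction and planar order preserved).\<close>
definition pop_iso :: "('v, 'e) pop \<Rightarrow> ('w, 'f) pop \<Rightarrow> bool" where
  "pop_iso G H \<longleftrightarrow> (\<exists>fv fe.
     bij_betw fv (pverts G) (pverts H) \<and> bij_betw fe (pedges G) (pedges H) \<and>
     (\<forall>e \<in> pedges G. psrc H (fe e) = fv (psrc G e) \<and> ptgt H (fe e) = fv (ptgt G e)) \<and>
     (\<forall>e1 \<in> pedges G. \<forall>e2 \<in> pedges G. pprec G e1 e2 \<longleftrightarrow> pprec H (fe e1) (fe e2)))"

text \<open>Number of elements of S strictly preceding x: for an output (input) edge this is k-1
  when it is the k-th one, i.e. o_k / i_k.\<close>
definition rank :: "('v, 'e) pop \<Rightarrow> 'e set \<Rightarrow> 'e \<Rightarrow> nat" where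
  "rank G S x = card {y \<in> S. pprec G y x}"

definition composable :: "('v1, 'e1) pop \<Rightarrow> ('v2, 'e2) pop \<Rightarrow> bool" where
  "composable G1 G2 \<longleftrightarrow> card (outputs G1) = card (inputs G2)"

text \<open>Edges of the composite: old non-output edges of G1 (Inl (Inl e)), old non-input edges of
  G2 (Inl (Inr e)), and the new edges \<open>e_k\<close> represented as Inr (o_k, i_k).\<close>
type_synonym ('e1, 'e2) cedge = "('e1 + 'e2) + ('e1 \<times> 'e2)"

text \<open>Position key: Q_k (k \<ge> 1) gets 3(k-1), the new edge e_k gets 3(k-1)+1, P_k gets 3(k-1)+2.\<close>
fun comp_key :: "('v1, 'e1) pop \<Rightarrow> ('v2, 'e2) pop \<Rightarrow> ('e1, 'e2) cedge \<Rightarrow> nat" where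
  "comp_key G1 G2 (Inl (Inl e)) = 3 * rank G1 (outputs G1) e"
| "comp_key G1 G2 (Inr (oe, i)) = 3 * rank G1 (outputs G1) oe + 1"
| "comp_key G1 G2 (Inl (Inr e)) = 3 * (rank G2 (inputs G2) e - 1) + 2"

fun comp_prec :: "('v1, 'e1) pop \<Rightarrow> ('v2, 'e2) pop \<Rightarrow> ('e1, 'e2) cedge \<Rightarrow> ('e1, 'e2) cedge \<Rightarrow> bool" where
  "comp_prec G1 G2 (Inl (Inl e)) (Inl (Inl e')) =
     (comp_key G1 G2 (Inl (Inl e)) < comp_key G1 G2 (Inl (Inl e'))
      \<or> (comp_key G1 G2 (Inl (Inl e)) = comp_key G1 G2 (Inl (Inl e')) \<and> pprec G1 e e'))"
| "comp_prec G1 G2 (Inl (Inr e)) (Inl (Inr e')) =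
     (comp_key G1 G2 (Inl (Inr e)) < comp_key G1 G2 (Inl (Inr e'))
      \<or> (comp_key G1 G2 (Inl (Inr e)) = comp_key G1 G2 (Inl (Inr e')) \<and> pprec G2 e e'))"
| "comp_prec G1 G2 x y = (comp_key G1 G2 x < comp_key G1 G2 y)"

fun comp_src :: "('v1, 'e1) pop \<Rightarrow> ('v2, 'e2) pop \<Rightarrow> ('e1, 'e2) cedge \<Rightarrow> 'v1 + 'v2" where
  "comp_src G1 G2 (Inl (Inl e)) = Inl (psrc G1 e)"
| "comp_src G1 G2 (Inl (Inr e)) = Inr (psrc G2 e)"
| "comp_src G1 G2 (Inr (oe, i)) = Inl (psrc G1 oe)"

fun comp_tgt :: "('v1, 'e1) pop \<Rightarrow> ('v2, 'e2) pop \<Rightarrow> ('e1, 'e2) cedge \<Rightarrow> 'v1 + 'v2" where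
  "comp_tgt G1 G2 (Inl (Inl e)) = Inl (ptgt G1 e)"
| "comp_tgt G1 G2 (Inl (Inr e)) = Inr (ptgt G2 e)"
| "comp_tgt G1 G2 (Inr (oe, i)) = Inr (ptgt G2 i)"

text \<open>pop_comp G2 G1 is (G2, prec2) \<circ> (G1, prec1).\<close>
definition pop_comp :: "('v2, 'e2) pop \<Rightarrow> ('v1, 'e1) pop \<Rightarrow> ('v1 + 'v2, ('e1, 'e2) cedge) pop" where
  "pop_comp G2 G1 =
     \<lparr> pverts = Inl ` (pverts G1 - sinks G1) \<union> Inr ` (pverts G2 - sources G2),
       pedges = Inl ` Inl ` (pedges G1 - outputs G1) \<union> Inl ` Inr ` (pedges G2 - inputs G2)
                \<union> Inr ` {(oe, i). oe \<in> outputs G1 \<and> i \<in> inputs G2 \<and>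
                                 rank G1 (outputs G1) oe = rank G2 (inputs G2) i},
       psrc = comp_src G1 G2,
       ptgt = comp_tgt G1 G2,
       pprec = comp_prec G1 G2 \<rparr>"

end

theory Submission
  imports Defs
begin


lemma half:
  fixes X :: "'a set" and X' :: "'b set" and lt :: "'a \<Rightarrow> 'a \<Rightarrow> bool"
    and lt' :: "'b \<Rightarrow> 'b \<Rightarrow> bool" and k :: "'a \<Rightarrow> nat" and k' :: "'b \<Rightarrow> nat"
    and R :: "'a \<Rightarrow> 'a \<Rightarrow> bool" and R' :: "'b \<Rightarrow> 'b \<Rightarrow> bool"
  assumes fX: "finite X" and fX': "finite X'"
  and bij: "bij_betw f X X'"
  and ord: "\<forall>x\<in>X. \<forall>y\<in>X. lt' (f x) (f y) \<longrightarrow> lt x y"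
  and lex: "\<forall>x\<in>X. \<forall>y\<in>X. k x \<noteq> k y \<longrightarrow> (lt x y \<longleftrightarrow> k x < k y)"
  and lex': "\<forall>x\<in>X'. \<forall>y\<in>X'. k' x \<noteq> k' y \<longrightarrow> (lt' x y \<longleftrightarrow> k' x < k' y)"
  and bd: "\<forall>x\<in>X. k x < 3*n" and bd': "\<forall>x\<in>X'. k' x < 3*n"
  and new: "\<forall>x\<in>X. \<forall>y\<in>X. k x = k y \<longrightarrow> k x mod 3 = 1 \<longrightarrow> x = y"
  and new_ex: "\<forall>j<n. \<exists>x\<in>X. k x = 3*j+1"
  and new': "\<forall>j<n. \<exists>x\<in>X'. k' x = 3*j+1"
  and cnt: "\<forall>j. card {x\<in>X. k x = 3*j} = card {x\<in>X'. k' x = 3*j}"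
  and rP: "\<forall>x\<in>X. \<forall>y\<in>X. k x + 1 = k y \<longrightarrow> k x mod 3 = 1 \<longrightarrow> R x y"
  and rN': "\<forall>x\<in>X'. \<forall>y\<in>X'. R' x y \<longrightarrow> k' x mod 3 = 1 \<longrightarrow> k' y mod 3 = 2"
  and Rp: "\<forall>x\<in>X. \<forall>y\<in>X. R x y \<longrightarrow> R' (f x) (f y)"
  and x: "x \<in> X" and xlt: "k x < k' (f x)"
  and minX: "\<forall>y\<in>X. k y < k x \<longrightarrow> k' (f y) = k y"
  shows False
proof -
  have fX'': "\<And>y. y \<in> X \<Longrightarrow> f y \<in> X'" using bij by (meson bij_betwE)
  have A: "k y \<le> k x" if y: "y \<in> X" "k' (f y) < k' (f x)" for y
  proof -
    have "lt' (f y) (f x)" using lex' fX'' x y by fastforce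
    hence "lt y x" using ord x y by blast
    thus ?thesis using lex x y by fastforce
  qed
  have A2: "k y = k x" if y: "y \<in> X" "k' (f y) < k' (f x)" "k' (f y) \<noteq> k y" for y
    using A[OF y(1,2)] minX y by force
  have surj: "\<And>y'. y' \<in> X' \<Longrightarrow> \<exists>y\<in>X. y' = f y" using bij
    by (metis bij_betw_def imageE)
  consider "k x mod 3 = 0" | "k x mod 3 = 1" | "k x mod 3 = 2" by linarith
  then show False
  proof cases
    case 1
    then obtain j where j: "k x = 3*j" by (metis mult_div_mod_eq add_0_right)
    let ?S = "{y\<in>X. k y = 3*j}" and ?S' = "{y\<in>X'. k' y = 3*j}"
    have "?S' \<subseteq> f ` (?S - {x})"
    proof
      fix y' assume "y' \<in> ?S'"
      then obtain y where y: "y \<in> X" "y' = f y" "k' (f y) = 3*j" using surj by blast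
      have "k y = k x" using A2[of y] y j xlt by (metis less_irrefl)
      moreover have "y \<noteq> x" using y j xlt by auto
      ultimately show "y' \<in> f ` (?S - {x})" using y j by auto
    qed
    hence "card ?S' \<le> card (f ` (?S - {x}))" using fX by (intro card_mono) auto
    also have "\<dots> \<le> card (?S - {x})" using fX by (intro card_image_le) auto
    also have "\<dots> < card ?S" using fX x j by (intro psubset_card_mono) auto
    finally show False using cnt by auto
  next
    case 2
    then obtain j where j: "k x = 3*j+1" by (metis mult_div_mod_eq add.commute)
    have "j < n" using bd x j by auto
    then obtain y' where y': "y' \<in> X'" "k' y' = 3*j+1" using new' by blast
    then obtain y where y: "y \<in> X" "y' = f y" using surj by blast
    have "k y = k x" using A2[of y] y y' j xlt by (metis less_irrefl)
    hence "y = x" using new y x j by auto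
    thus False using y y' j xlt by auto
  next
    case 3
    then obtain j where j: "k x = 3*j+2" by (metis mult_div_mod_eq add.commute)
    have jn: "j < n" using bd x j by auto
    then obtain e where e: "e \<in> X" "k e = 3*j+1" using new_ex by blast
    have keP: "k' (f e) = 3*j+1" using minX e j by auto
    have b2: "k' (f y) mod 3 = 2" if "y \<in> X" "k y = 3*j+2" for y
    proof -
      have "R e y" using rP e that by auto
      hence "R' (f e) (f y)" using Rp e that by auto
      moreover have "k' (f e) mod 3 = 1" using keP by simp
      ultimately show ?thesis using rN' fX'' e that by blast
    qed
    have "k' (f x) mod 3 = 2" using b2 x j by auto
    hence b5: "k' (f x) \<ge> 3*j+5" using xlt j by presburger
    hence "j+1 < n" using bd' fX'' x by fastforce
    then obtain w' where w': "w' \<in> X'" "k' w' = 3*(j+1)+1" using new' by blast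
    then obtain w where w: "w \<in> X" "w' = f w" using surj by blast
    have "k w \<le> k x" using A[of w] w w' j b5 by auto
    hence "k w = k x" using A2[of w] w w' j b5 by auto
    hence "k' (f w) mod 3 = 2" using b2 w j by auto
    thus False using w w' by auto
  qed
qed

lemma keys_agree:
  fixes X :: "'a set" and X' :: "'b set" and lt :: "'a \<Rightarrow> 'a \<Rightarrow> bool"
    and lt' :: "'b \<Rightarrow> 'b \<Rightarrow> bool" and k :: "'a \<Rightarrow> nat" and k' :: "'b \<Rightarrow> nat"
    and R :: "'a \<Rightarrow> 'a \<Rightarrow> bool" and R' :: "'b \<Rightarrow> 'b \<Rightarrow> bool"
  assumes fX: "finite X" and fX': "finite X'"
  and bij: "bij_betw f X X'"
  and ord: "\<forall>x\<in>X. \<forall>y\<in>X. lt' (f x) (f y) \<longleftrightarrow> lt x y"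
  and lex: "\<forall>x\<in>X. \<forall>y\<in>X. k x \<noteq> k y \<longrightarrow> (lt x y \<longleftrightarrow> k x < k y)"
  and lex': "\<forall>x\<in>X'. \<forall>y\<in>X'. k' x \<noteq> k' y \<longrightarrow> (lt' x y \<longleftrightarrow> k' x < k' y)"
  and bd: "\<forall>x\<in>X. k x < 3*n" and bd': "\<forall>x\<in>X'. k' x < 3*n"
  and new: "\<forall>x\<in>X. \<forall>y\<in>X. k x = k y \<longrightarrow> k x mod 3 = 1 \<longrightarrow> x = y"
  and new2: "\<forall>x\<in>X'. \<forall>y\<in>X'. k' x = k' y \<longrightarrow> k' x mod 3 = 1 \<longrightarrow> x = y"
  and new_ex: "\<forall>j<n. \<exists>x\<in>X. k x = 3*j+1"
  and new': "\<forall>j<n. \<exists>x\<in>X'. k' x = 3*j+1"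
  and cnt: "\<forall>j. card {x\<in>X. k x = 3*j} = card {x\<in>X'. k' x = 3*j}"
  and rP: "\<forall>x\<in>X. \<forall>y\<in>X. k x + 1 = k y \<longrightarrow> k x mod 3 = 1 \<longrightarrow> R x y"
  and rP': "\<forall>x\<in>X'. \<forall>y\<in>X'. k' x + 1 = k' y \<longrightarrow> k' x mod 3 = 1 \<longrightarrow> R' x y"
  and rN: "\<forall>x\<in>X. \<forall>y\<in>X. R x y \<longrightarrow> k x mod 3 = 1 \<longrightarrow> k y mod 3 = 2"
  and rN': "\<forall>x\<in>X'. \<forall>y\<in>X'. R' x y \<longrightarrow> k' x mod 3 = 1 \<longrightarrow> k' y mod 3 = 2"
  and Rp: "\<forall>x\<in>X. \<forall>y\<in>X. R' (f x) (f y) \<longleftrightarrow> R x y"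
  shows "\<forall>x\<in>X. k' (f x) = k x"
proof (rule ccontr)
  assume "\<not> ?thesis"
  then obtain x0 where "x0 \<in> X \<and> k' (f x0) \<noteq> k x0" by blast
  from ex_has_least_nat[of "\<lambda>x. x \<in> X \<and> k' (f x) \<noteq> k x", OF this,
       of "\<lambda>x. min (k x) (k' (f x))"]
  obtain x where x: "x \<in> X" "k' (f x) \<noteq> k x"
    and mn: "\<forall>y. y \<in> X \<and> k' (f y) \<noteq> k y \<longrightarrow> min (k x) (k' (f x)) \<le> min (k y) (k' (f y))"
    by blast
  let ?g = "inv_into X f"
  have bij2: "bij_betw ?g X' X" using bij by (rule bij_betw_inv_into)
  have gf: "\<And>y. y \<in> X \<Longrightarrow> ?g (f y) = y" using bij by (meson bij_betw_inv_into_left)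
  have fg: "\<And>y. y \<in> X' \<Longrightarrow> f (?g y) = y" using bij by (meson bij_betw_inv_into_right)
  have gX: "\<And>y. y \<in> X' \<Longrightarrow> ?g y \<in> X" using bij2 by (meson bij_betwE)
  have fX2: "\<And>y. y \<in> X \<Longrightarrow> f y \<in> X'" using bij by (meson bij_betwE)
  show False
  proof (cases "k x < k' (f x)")
    case True
    show False
    proof (rule half[OF fX fX' bij _ lex lex' bd bd' new new_ex new' cnt rP rN' _ x(1) True])
      show "\<forall>x\<in>X. \<forall>y\<in>X. lt' (f x) (f y) \<longrightarrow> lt x y" using ord by blast
      show "\<forall>x\<in>X. \<forall>y\<in>X. R x y \<longrightarrow> R' (f x) (f y)" using Rp by blast
      show "\<forall>y\<in>X. k y < k x \<longrightarrow> k' (f y) = k y"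
        using mn True by fastforce
    qed
  next
    case False
    hence lt: "k' (f x) < k (?g (f x))" using x gf by auto
    show False
    proof (rule half[OF fX' fX bij2 _ lex' lex bd' bd new2 new' new_ex _ rP' rN _ fX2[OF x(1)] lt])
      show "\<forall>x\<in>X'. \<forall>y\<in>X'. lt (?g x) (?g y) \<longrightarrow> lt' x y" using ord gX fg by metis
      show "\<forall>j. card {x\<in>X'. k' x = 3*j} = card {x\<in>X. k x = 3*j}" using cnt by simp
      show "\<forall>x\<in>X'. \<forall>y\<in>X'. R' x y \<longrightarrow> R (?g x) (?g y)" using Rp gX fg by metis
      show "\<forall>y\<in>X'. k' y < k' (f x) \<longrightarrow> k (?g y) = k' y"
      proof (intro ballI impI)
        fix y assume y: "y \<in> X'" "k' y < k' (f x)"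
        have "min (k x) (k' (f x)) = k' (f x)" using False by simp
        thus "k (?g y) = k' y" using mn[rule_format, of "?g y"] gX[OF y(1)] fg[OF y(1)] y(2) by fastforce
      qed
    qed
  qed
qed




section \<open>Generic facts on planar orders and ranks\<close>

lemma po_irrefl: "planar_order G \<Longrightarrow> e \<in> pedges G \<Longrightarrow> \<not> pprec G e e"
  unfolding planar_order_def by blast
lemma po_trans: "planar_order G \<Longrightarrow> a \<in> pedges G \<Longrightarrow> b \<in> pedges G \<Longrightarrow> c \<in> pedges G
   \<Longrightarrow> pprec G a b \<Longrightarrow> pprec G b c \<Longrightarrow> pprec G a c"
  unfolding planar_order_def by blast
lemma po_total: "planar_order G \<Longrightarrow> a \<in> pedges G \<Longrightarrow> b \<in> pedges G \<Longrightarrow> a \<noteq> b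
   \<Longrightarrow> pprec G a b \<or> pprec G b a"
  unfolding planar_order_def by blast
lemma po_reach: "planar_order G \<Longrightarrow> a \<in> pedges G \<Longrightarrow> b \<in> pedges G \<Longrightarrow> reach G a b
   \<Longrightarrow> pprec G a b"
  unfolding planar_order_def by blast
lemma po_P2: "planar_order G \<Longrightarrow> a \<in> pedges G \<Longrightarrow> b \<in> pedges G \<Longrightarrow> c \<in> pedges G
   \<Longrightarrow> pprec G a b \<Longrightarrow> pprec G b c \<Longrightarrow> reach G a c \<Longrightarrow> reach G a b \<or> reach G b c"
  unfolding planar_order_def by blast

lemma rank_less_iff:
  assumes po: "planar_order G" and fin: "finite (pedges G)" and S: "S \<subseteq> pedges G"
    and s: "s \<in> S" and x: "x \<in> pedges G"
  shows "pprec G s x \<longleftrightarrow> rank G S s < rank G S x"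
proof
  assume sx: "pprec G s x"
  have "{z\<in>S. pprec G z s} \<subset> {z\<in>S. pprec G z x}"
  proof
    show "{z\<in>S. pprec G z s} \<subseteq> {z\<in>S. pprec G z x}"
      using po_trans[OF po] S s x sx by blast
    show "{z\<in>S. pprec G z s} \<noteq> {z\<in>S. pprec G z x}"
      using po_irrefl[OF po] S s sx by blast
  qed
  moreover have "finite {z\<in>S. pprec G z x}" using fin S by (metis (no_types, lifting) finite_subset mem_Collect_eq subsetI)
  ultimately show "rank G S s < rank G S x" unfolding rank_def by (rule psubset_card_mono[rotated])
next
  assume lt: "rank G S s < rank G S x"
  show "pprec G s x"
  proof (rule ccontr)
    assume ns: "\<not> pprec G s x"
    have "s \<noteq> x" using lt by auto
    hence xs: "pprec G x s" using po_total[OF po, of s x] S s x ns by blast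
    have "{z\<in>S. pprec G z x} \<subseteq> {z\<in>S. pprec G z s}"
      using po_trans[OF po] S s x xs by blast
    moreover have "finite {z\<in>S. pprec G z s}" using fin S by (metis (no_types, lifting) finite_subset mem_Collect_eq subsetI)
    ultimately have "rank G S x \<le> rank G S s" unfolding rank_def by (rule card_mono[rotated])
    thus False using lt by auto
  qed
qed

lemma rank_mono:
  assumes po: "planar_order G" and fin: "finite (pedges G)" and S: "S \<subseteq> pedges G"
    and x: "x \<in> pedges G" and y: "y \<in> pedges G" and xy: "pprec G x y"
  shows "rank G S x \<le> rank G S y"
proof -
  have "{z\<in>S. pprec G z x} \<subseteq> {z\<in>S. pprec G z y}"
    using po_trans[OF po] S x y xy by blast
  moreover have "finite {z\<in>S. pprec G z y}" using fin S by (metis (no_types, lifting) finite_subset mem_Collect_eq subsetI)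
  ultimately show ?thesis unfolding rank_def by (rule card_mono[rotated])
qed

lemma rank_less_imp:
  assumes po: "planar_order G" and fin: "finite (pedges G)" and S: "S \<subseteq> pedges G"
    and x: "x \<in> pedges G" and y: "y \<in> pedges G" and lt: "rank G S x < rank G S y"
  shows "pprec G x y"
proof (rule ccontr)
  assume "\<not> pprec G x y"
  moreover have "x \<noteq> y" using lt by auto
  ultimately have "pprec G y x" using po_total[OF po x y] by blast
  hence "rank G S y \<le> rank G S x" using rank_mono[OF po fin S y x] by blast
  thus False using lt by auto
qed

lemma rank_bij:
  assumes po: "planar_order G" and fin: "finite (pedges G)" and S: "S \<subseteq> pedges G"
  shows "bij_betw (rank G S) S {..<card S}"
proof -
  have finS: "finite S" using fin S finite_subset by blast
  have inj: "inj_on (rank G S) S"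
  proof
    fix a b assume a: "a \<in> S" and b: "b \<in> S" and eq: "rank G S a = rank G S b"
    show "a = b"
    proof (rule ccontr)
      assume "a \<noteq> b"
      hence "pprec G a b \<or> pprec G b a" using po_total[OF po] a b S by blast
      thus False using rank_less_iff[OF po fin S] a b S eq by fastforce
    qed
  qed
  have sub: "rank G S ` S \<subseteq> {..<card S}"
  proof
    fix r assume "r \<in> rank G S ` S"
    then obtain s where s: "s \<in> S" "r = rank G S s" by blast
    have "{z\<in>S. pprec G z s} \<subset> S" using s po_irrefl[OF po] S by blast
    hence "rank G S s < card S" unfolding rank_def using finS by (rule psubset_card_mono[rotated])
    thus "r \<in> {..<card S}" using s by simp
  qed
  have "card (rank G S ` S) = card {..<card S}" using card_image[OF inj] by simp
  hence "rank G S ` S = {..<card S}" using card_subset_eq[OF _ sub] by simp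
  thus ?thesis using inj unfolding bij_betw_def by simp
qed




section \<open>Degree facts\<close>

lemma prog_fin: "progressive G \<Longrightarrow> finite (pedges G)" unfolding progressive_def by blast
lemma prog_finV: "progressive G \<Longrightarrow> finite (pverts G)" unfolding progressive_def by blast
lemma prog_ends: "progressive G \<Longrightarrow> e \<in> pedges G \<Longrightarrow> psrc G e \<in> pverts G \<and> ptgt G e \<in> pverts G"
  unfolding progressive_def by blast
lemma prog_acyc: "progressive G \<Longrightarrow> e \<in> pedges G \<Longrightarrow> (e, e) \<notin> (edge_step G)\<^sup>+"
  unfolding progressive_def by blast

lemma outdeg_pos: assumes "progressive G" "e \<in> pedges G" shows "outdeg G (psrc G e) \<ge> 1"
proof -
  have "finite {x \<in> pedges G. psrc G x = psrc G e}" using prog_fin[OF assms(1)] by auto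
  moreover have "e \<in> {x \<in> pedges G. psrc G x = psrc G e}" using assms by auto
  ultimately have "card {x \<in> pedges G. psrc G x = psrc G e} > 0" using card_gt_0_iff by blast
  thus ?thesis unfolding outdeg_def by linarith
qed
lemma indeg_pos: assumes "progressive G" "e \<in> pedges G" shows "indeg G (ptgt G e) \<ge> 1"
proof -
  have "finite {x \<in> pedges G. ptgt G x = ptgt G e}" using prog_fin[OF assms(1)] by auto
  moreover have "e \<in> {x \<in> pedges G. ptgt G x = ptgt G e}" using assms by auto
  ultimately have "card {x \<in> pedges G. ptgt G x = ptgt G e} > 0" using card_gt_0_iff by blast
  thus ?thesis unfolding indeg_def by linarith
qed

lemma input_src_deg: assumes "progressive G" "e \<in> inputs G"
  shows "indeg G (psrc G e) = 0" "outdeg G (psrc G e) = 1"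
proof -
  have "degree G (psrc G e) = 1" "e \<in> pedges G" using assms(2) unfolding inputs_def boundary_def by auto
  moreover have "outdeg G (psrc G e) \<ge> 1" by (rule outdeg_pos[OF assms(1) calculation(2)])
  ultimately show "indeg G (psrc G e) = 0" "outdeg G (psrc G e) = 1" unfolding degree_def by auto
qed

lemma output_tgt_deg: assumes "progressive G" "e \<in> outputs G"
  shows "outdeg G (ptgt G e) = 0" "indeg G (ptgt G e) = 1"
proof -
  have "degree G (ptgt G e) = 1" "e \<in> pedges G" using assms(2) unfolding outputs_def boundary_def by auto
  moreover have "indeg G (ptgt G e) \<ge> 1" by (rule indeg_pos[OF assms(1) calculation(2)])
  ultimately show "outdeg G (ptgt G e) = 0" "indeg G (ptgt G e) = 1" unfolding degree_def by auto
qed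

lemma card1_eq: "card A = 1 \<Longrightarrow> a \<in> A \<Longrightarrow> b \<in> A \<Longrightarrow> a = b"
  by (erule card_1_singletonE) auto

lemma input_src_uniq: assumes "progressive G" "e \<in> inputs G" "d \<in> pedges G" "psrc G d = psrc G e"
  shows "d = e"
proof -
  have "e \<in> pedges G" using assms(2) unfolding inputs_def by auto
  hence "d \<in> {x \<in> pedges G. psrc G x = psrc G e}" "e \<in> {x \<in> pedges G. psrc G x = psrc G e}"
    using assms by auto
  thus ?thesis using card1_eq[OF input_src_deg(2)[OF assms(1,2), unfolded outdeg_def]] by blast
qed

lemma output_tgt_uniq: assumes "progressive G" "e \<in> outputs G" "d \<in> pedges G" "ptgt G d = ptgt G e"
  shows "d = e"
proof -
  have "e \<in> pedges G" using assms(2) unfolding outputs_def by auto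
  hence "d \<in> {x \<in> pedges G. ptgt G x = ptgt G e}" "e \<in> {x \<in> pedges G. ptgt G x = ptgt G e}"
    using assms by auto
  thus ?thesis using card1_eq[OF output_tgt_deg(2)[OF assms(1,2), unfolded indeg_def]] by blast
qed

lemma input_no_in: assumes "progressive G" "e \<in> inputs G" "d \<in> pedges G"
  shows "ptgt G d \<noteq> psrc G e"
proof
  assume "ptgt G d = psrc G e"
  hence "d \<in> {x \<in> pedges G. ptgt G x = psrc G e}" using assms by auto
  moreover have "finite {x \<in> pedges G. ptgt G x = psrc G e}" using prog_fin[OF assms(1)] by auto
  ultimately have "card {x \<in> pedges G. ptgt G x = psrc G e} \<noteq> 0" using card_0_eq by blast
  thus False using input_src_deg(1)[OF assms(1,2)] unfolding indeg_def by simp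
qed

lemma output_no_out: assumes "progressive G" "e \<in> outputs G" "d \<in> pedges G"
  shows "psrc G d \<noteq> ptgt G e"
proof
  assume "psrc G d = ptgt G e"
  hence "d \<in> {x \<in> pedges G. psrc G x = ptgt G e}" using assms by auto
  moreover have "finite {x \<in> pedges G. psrc G x = ptgt G e}" using prog_fin[OF assms(1)] by auto
  ultimately have "card {x \<in> pedges G. psrc G x = ptgt G e} \<noteq> 0" using card_0_eq by blast
  thus False using output_tgt_deg(1)[OF assms(1,2)] unfolding outdeg_def by simp
qed

lemma src_not_sink: "progressive G \<Longrightarrow> e \<in> pedges G \<Longrightarrow> psrc G e \<notin> sinks G"
  unfolding sinks_def using outdeg_pos by fastforce
lemma tgt_not_source: "progressive G \<Longrightarrow> e \<in> pedges G \<Longrightarrow> ptgt G e \<notin> sources G"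
  unfolding sources_def using indeg_pos by fastforce
lemma src_not_source: assumes "progressive G" "e \<in> pedges G" "e \<notin> inputs G"
  shows "psrc G e \<notin> sources G"
proof
  assume "psrc G e \<in> sources G"
  hence "psrc G e \<in> pverts G" "indeg G (psrc G e) = 0" unfolding sources_def by auto
  hence "degree G (psrc G e) = 1" using assms(1) unfolding progressive_def by blast
  hence "e \<in> inputs G" using assms(2) \<open>psrc G e \<in> pverts G\<close> unfolding inputs_def boundary_def by auto
  thus False using assms(3) by blast
qed
lemma tgt_not_sink: assumes "progressive G" "e \<in> pedges G" "e \<notin> outputs G"
  shows "ptgt G e \<notin> sinks G"
proof
  assume "ptgt G e \<in> sinks G"
  hence "ptgt G e \<in> pverts G" "outdeg G (ptgt G e) = 0" unfolding sinks_def by auto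
  hence "degree G (ptgt G e) = 1" using assms(1) unfolding progressive_def by blast
  hence "e \<in> outputs G" using assms(2) \<open>ptgt G e \<in> pverts G\<close> unfolding outputs_def boundary_def by auto
  thus False using assms(3) by blast
qed

lemma has_out_edge: assumes "progressive G" "e \<in> pedges G" "e \<notin> outputs G"
  shows "\<exists>d\<in>pedges G. psrc G d = ptgt G e"
proof -
  have "outdeg G (ptgt G e) \<noteq> 0" using tgt_not_sink[OF assms] prog_ends[OF assms(1,2)]
    unfolding sinks_def by auto
  hence "{d \<in> pedges G. psrc G d = ptgt G e} \<noteq> {}" unfolding outdeg_def by (metis card.empty)
  thus ?thesis by blast
qed

lemma has_in_edge: assumes "progressive G" "e \<in> pedges G" "e \<notin> inputs G"
  shows "\<exists>d\<in>pedges G. ptgt G d = psrc G e"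
proof -
  have "indeg G (psrc G e) \<noteq> 0" using src_not_source[OF assms] prog_ends[OF assms(1,2)]
    unfolding sources_def by auto
  hence "{d \<in> pedges G. ptgt G d = psrc G e} \<noteq> {}" unfolding indeg_def by (metis card.empty)
  thus ?thesis by blast
qed

section \<open>Steps and reachability\<close>

lemma step_D: "(a, b) \<in> edge_step G \<Longrightarrow> a \<in> pedges G \<and> b \<in> pedges G \<and> ptgt G a = psrc G b"
  unfolding edge_step_def by auto
lemma step_I: "a \<in> pedges G \<Longrightarrow> b \<in> pedges G \<Longrightarrow> ptgt G a = psrc G b \<Longrightarrow> (a, b) \<in> edge_step G"
  unfolding edge_step_def by auto

lemma trancl_not_input: assumes "progressive G" "(a, b) \<in> (edge_step G)\<^sup>+"
  shows "b \<notin> inputs G"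
proof -
  obtain c where c: "(c, b) \<in> edge_step G" using assms(2) by (meson tranclD2)
  have "c \<in> pedges G" "ptgt G c = psrc G b" using step_D[OF c] by auto
  thus ?thesis using input_no_in[OF assms(1), of b c] by blast
qed

lemma trancl_not_output: assumes "progressive G" "(a, b) \<in> (edge_step G)\<^sup>+"
  shows "a \<notin> outputs G"
proof -
  obtain c where c: "(a, c) \<in> edge_step G" using assms(2) by (meson tranclD)
  have "c \<in> pedges G" "psrc G c = ptgt G a" using step_D[OF c] by auto
  thus ?thesis using output_no_out[OF assms(1), of a c] by blast
qed

lemma trancl_edges: assumes "(a, b) \<in> (edge_step G)\<^sup>+" shows "a \<in> pedges G \<and> b \<in> pedges G"
proof -
  obtain c where c: "(a, c) \<in> edge_step G" using tranclD[OF assms] by blast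
  obtain d where d: "(d, b) \<in> edge_step G" using tranclD2[OF assms] by blast
  show ?thesis using step_D[OF c] step_D[OF d] by blast
qed

lemma finite_max_rel:
  assumes "finite T" "T \<noteq> {}"
    and tr: "\<forall>a\<in>T. \<forall>b\<in>T. \<forall>c\<in>T. r a b \<longrightarrow> r b c \<longrightarrow> r a c"
    and irr: "\<forall>a\<in>T. \<not> r a a"
  shows "\<exists>m\<in>T. \<forall>d\<in>T. \<not> r m d"
  using assms
proof (induction T rule: finite_ne_induct)
  case (singleton x) thus ?case by auto
next
  case (insert x F)
  then obtain m where m: "m \<in> F" "\<forall>d\<in>F. \<not> r m d" by blast
  show ?case
  proof (cases "r m x")
    case True
    have "\<forall>d\<in>insert x F. \<not> r x d"
    proof
      fix d assume d: "d \<in> insert x F"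
      show "\<not> r x d"
      proof
        assume xd: "r x d"
        show False
        proof (cases "d = x")
          case True thus False using xd insert.prems(2) by blast
        next
          case False
          hence "d \<in> F" using d by blast
          hence "r m d" using insert.prems(1) True m xd by blast
          thus False using m \<open>d \<in> F\<close> by blast
        qed
      qed
    qed
    thus ?thesis by blast
  next
    case False thus ?thesis using m by blast
  qed
qed

lemma reach_some_output:
  assumes pg: "pop_graph G" and e: "e \<in> pedges G" and ne: "e \<notin> outputs G"
  shows "\<exists>oo\<in>outputs G. reach G e oo"
proof -
  have pr: "progressive G" and po: "planar_order G" using pg unfolding pop_graph_def by auto
  let ?T = "{d. (e, d) \<in> (edge_step G)\<^sup>+}"
  have Tsub: "?T \<subseteq> pedges G" using trancl_edges by fast
  obtain d0 where d0: "d0 \<in> pedges G" "psrc G d0 = ptgt G e" using has_out_edge[OF pr e ne] by blast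
  have "(e, d0) \<in> edge_step G" using step_I[OF e d0(1)] d0 by simp
  hence Tne: "?T \<noteq> {}" by blast
  have fT: "finite ?T" using Tsub prog_fin[OF pr] finite_subset by blast
  have tr: "\<forall>a\<in>?T. \<forall>b\<in>?T. \<forall>c\<in>?T. pprec G a b \<longrightarrow> pprec G b c \<longrightarrow> pprec G a c"
    using po_trans[OF po] Tsub by blast
  have irr: "\<forall>a\<in>?T. \<not> pprec G a a" using po_irrefl[OF po] Tsub by blast
  obtain m where m: "m \<in> ?T" "\<forall>d\<in>?T. \<not> pprec G m d"
    using finite_max_rel[OF fT Tne tr irr] by blast
  have mE: "m \<in> pedges G" using m Tsub by blast
  have "m \<in> outputs G"
  proof (rule ccontr)
    assume "m \<notin> outputs G"
    then obtain d where d: "d \<in> pedges G" "psrc G d = ptgt G m" using has_out_edge[OF pr mE] by blast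
    have md: "(m, d) \<in> edge_step G" using step_I[OF mE d(1)] d by simp
    have em: "(e, m) \<in> (edge_step G)\<^sup>+" using m(1) by simp
    have "(e, d) \<in> (edge_step G)\<^sup>+" by (rule trancl_into_trancl[OF em md])
    hence "d \<in> ?T" by simp
    have "m \<noteq> d" using md prog_acyc[OF pr mE] by blast
    hence "reach G m d" unfolding reach_def using md by blast
    hence "pprec G m d" using po_reach[OF po mE d(1)] by blast
    thus False using m \<open>d \<in> ?T\<close> by blast
  qed
  moreover have "reach G e m"
  proof -
    have em: "(e, m) \<in> (edge_step G)\<^sup>+" using m(1) by simp
    hence "e \<noteq> m" using prog_acyc[OF pr e] by blast
    thus ?thesis unfolding reach_def using em by blast
  qed
  ultimately show ?thesis by blast
qed

lemma reached_some_input: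
  assumes pg: "pop_graph G" and e: "e \<in> pedges G" and ne: "e \<notin> inputs G"
  shows "\<exists>i\<in>inputs G. reach G i e"
proof -
  have pr: "progressive G" and po: "planar_order G" using pg unfolding pop_graph_def by auto
  let ?T = "{d. (d, e) \<in> (edge_step G)\<^sup>+}"
  have Tsub: "?T \<subseteq> pedges G" using trancl_edges by fast
  obtain d0 where d0: "d0 \<in> pedges G" "ptgt G d0 = psrc G e" using has_in_edge[OF pr e ne] by blast
  have "(d0, e) \<in> edge_step G" using step_I[OF d0(1) e] d0 by simp
  hence Tne: "?T \<noteq> {}" by blast
  have fT: "finite ?T" using Tsub prog_fin[OF pr] finite_subset by blast
  have tr: "\<forall>a\<in>?T. \<forall>b\<in>?T. \<forall>c\<in>?T. pprec G b a \<longrightarrow> pprec G c b \<longrightarrow> pprec G c a"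
    using po_trans[OF po] Tsub by blast
  have irr: "\<forall>a\<in>?T. \<not> pprec G a a" using po_irrefl[OF po] Tsub by blast
  obtain m where m: "m \<in> ?T" "\<forall>d\<in>?T. \<not> pprec G d m"
    using finite_max_rel[OF fT Tne, of "\<lambda>a b. pprec G b a"] tr irr by blast
  have mE: "m \<in> pedges G" using m Tsub by blast
  have "m \<in> inputs G"
  proof (rule ccontr)
    assume "m \<notin> inputs G"
    then obtain d where d: "d \<in> pedges G" "ptgt G d = psrc G m" using has_in_edge[OF pr mE] by blast
    have md: "(d, m) \<in> edge_step G" using step_I[OF d(1) mE] d by simp
    have em: "(m, e) \<in> (edge_step G)\<^sup>+" using m(1) by simp
    have "(d, e) \<in> (edge_step G)\<^sup>+" by (rule trancl_into_trancl2[OF md em])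
    hence "d \<in> ?T" by simp
    have "m \<noteq> d" using md prog_acyc[OF pr mE] by blast
    hence "reach G d m" unfolding reach_def using md by blast
    hence "pprec G d m" using po_reach[OF po d(1) mE] by blast
    thus False using m \<open>d \<in> ?T\<close> by blast
  qed
  moreover have "reach G m e"
  proof -
    have em: "(m, e) \<in> (edge_step G)\<^sup>+" using m(1) by simp
    hence "e \<noteq> m" using prog_acyc[OF pr e] by blast
    thus ?thesis unfolding reach_def using em by blast
  qed
  ultimately show ?thesis by blast
qed




section \<open>Isomorphism facts\<close>

lemma trancl_bij:
  assumes bij: "bij_betw f A B" and rA: "r \<subseteq> A \<times> A" and sB: "s \<subseteq> B \<times> B"
    and rs: "\<forall>x\<in>A. \<forall>y\<in>A. (f x, f y) \<in> s \<longleftrightarrow> (x, y) \<in> r"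
    and x: "x \<in> A" and y: "y \<in> A"
  shows "(f x, f y) \<in> s\<^sup>+ \<longleftrightarrow> (x, y) \<in> r\<^sup>+"
proof
  assume "(x, y) \<in> r\<^sup>+"
  thus "(f x, f y) \<in> s\<^sup>+"
  proof (induction rule: trancl_induct)
    case (base z)
    hence "z \<in> A" using rA by blast
    thus ?case using base rs x by blast
  next
    case (step z w)
    hence zw: "z \<in> A" "w \<in> A" using rA by auto
    hence "(f z, f w) \<in> s" using rs step by blast
    thus ?case using step.IH by (meson trancl_into_trancl)
  qed
next
  have surj: "\<And>v. v \<in> B \<Longrightarrow> \<exists>z\<in>A. v = f z" using bij by (metis bij_betw_def imageE)
  have inj: "inj_on f A" using bij bij_betw_def by blast
  have gen: "\<exists>z\<in>A. v = f z \<and> (x, z) \<in> r\<^sup>+" if "(u, v) \<in> s\<^sup>+" "u = f x" for u v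
    using that(1)
  proof (induction rule: trancl_induct)
    case (base v)
    hence "v \<in> B" using sB by blast
    then obtain z where z: "z \<in> A" "v = f z" using surj by blast
    hence "(x, z) \<in> r" using rs x base that(2) by blast
    thus ?case using z by blast
  next
    case (step w v)
    then obtain z where z: "z \<in> A" "w = f z" "(x, z) \<in> r\<^sup>+" by blast
    have "v \<in> B" using step sB by blast
    then obtain z' where z': "z' \<in> A" "v = f z'" using surj by blast
    hence "(z, z') \<in> r" using rs z step by blast
    hence "(x, z') \<in> r\<^sup>+" using z(3) by (meson trancl_into_trancl)
    thus ?case using z' by blast
  qed
  assume "(f x, f y) \<in> s\<^sup>+"
  then obtain z where z: "z \<in> A" "f y = f z" "(x, z) \<in> r\<^sup>+" using gen by blast
  have "z = y" using inj z y by (metis inj_on_def)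
  thus "(x, y) \<in> r\<^sup>+" using z by simp
qed

lemma step_sub: "edge_step G \<subseteq> pedges G \<times> pedges G"
  unfolding edge_step_def by auto

locale isom =
  fixes G :: "('v, 'e) pop" and H :: "('w, 'f) pop" and fv fe
  assumes bv: "bij_betw fv (pverts G) (pverts H)"
    and be: "bij_betw fe (pedges G) (pedges H)"
    and inc: "\<forall>e\<in>pedges G. psrc H (fe e) = fv (psrc G e) \<and> ptgt H (fe e) = fv (ptgt G e)"
    and ordp: "\<forall>e1\<in>pedges G. \<forall>e2\<in>pedges G. pprec G e1 e2 \<longleftrightarrow> pprec H (fe e1) (fe e2)"
    and ends: "\<forall>e\<in>pedges G. psrc G e \<in> pverts G \<and> ptgt G e \<in> pverts G"
begin

lemma injv: "inj_on fv (pverts G)" using bv bij_betw_def by blast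
lemma inje: "inj_on fe (pedges G)" using be bij_betw_def by blast
lemma feE: "e \<in> pedges G \<Longrightarrow> fe e \<in> pedges H" using be by (meson bij_betwE)
lemma fvV: "v \<in> pverts G \<Longrightarrow> fv v \<in> pverts H" using bv by (meson bij_betwE)
lemma surjE: "e' \<in> pedges H \<Longrightarrow> \<exists>e\<in>pedges G. e' = fe e" using be by (metis bij_betw_def imageE)

lemma stepp: assumes x: "x \<in> pedges G" and y: "y \<in> pedges G"
  shows "(fe x, fe y) \<in> edge_step H \<longleftrightarrow> (x, y) \<in> edge_step G"
proof -
  have "ptgt H (fe x) = psrc H (fe y) \<longleftrightarrow> fv (ptgt G x) = fv (psrc G y)" using inc x y by simp
  also have "\<dots> \<longleftrightarrow> ptgt G x = psrc G y"
  proof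
    show "fv (ptgt G x) = fv (psrc G y) \<Longrightarrow> ptgt G x = psrc G y" using injv ends x y by (meson inj_on_eq_iff)
  qed simp
  finally show ?thesis unfolding edge_step_def using x y feE by auto
qed

lemma reachp: assumes x: "x \<in> pedges G" and y: "y \<in> pedges G"
  shows "reach H (fe x) (fe y) \<longleftrightarrow> reach G x y"
proof -
  have t: "(fe x, fe y) \<in> (edge_step H)\<^sup>+ \<longleftrightarrow> (x, y) \<in> (edge_step G)\<^sup>+"
    using trancl_bij[OF be step_sub step_sub _ x y] stepp by blast
  have "fe x = fe y \<longleftrightarrow> x = y" using inje x y by (meson inj_on_eq_iff)
  thus ?thesis unfolding reach_def using t by blast
qed

lemma indegp: assumes v: "v \<in> pverts G" shows "indeg H (fv v) = indeg G v"
proof -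
  have "{e' \<in> pedges H. ptgt H e' = fv v} = fe ` {e \<in> pedges G. ptgt G e = v}"
  proof
    show "fe ` {e \<in> pedges G. ptgt G e = v} \<subseteq> {e' \<in> pedges H. ptgt H e' = fv v}"
      using inc feE by auto
    show "{e' \<in> pedges H. ptgt H e' = fv v} \<subseteq> fe ` {e \<in> pedges G. ptgt G e = v}"
    proof
      fix e' assume e': "e' \<in> {e' \<in> pedges H. ptgt H e' = fv v}"
      then obtain e where e: "e \<in> pedges G" "e' = fe e" using surjE by blast
      hence "fv (ptgt G e) = fv v" using inc e' by auto
      hence "ptgt G e = v" using injv ends e v by (meson inj_on_eq_iff)
      thus "e' \<in> fe ` {e \<in> pedges G. ptgt G e = v}" using e by blast
    qed
  qed
  moreover have "inj_on fe {e \<in> pedges G. ptgt G e = v}" using inje by (rule inj_on_subset) auto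
  ultimately show ?thesis unfolding indeg_def by (simp add: card_image)
qed

lemma outdegp: assumes v: "v \<in> pverts G" shows "outdeg H (fv v) = outdeg G v"
proof -
  have "{e' \<in> pedges H. psrc H e' = fv v} = fe ` {e \<in> pedges G. psrc G e = v}"
  proof
    show "fe ` {e \<in> pedges G. psrc G e = v} \<subseteq> {e' \<in> pedges H. psrc H e' = fv v}"
      using inc feE by auto
    show "{e' \<in> pedges H. psrc H e' = fv v} \<subseteq> fe ` {e \<in> pedges G. psrc G e = v}"
    proof
      fix e' assume e': "e' \<in> {e' \<in> pedges H. psrc H e' = fv v}"
      then obtain e where e: "e \<in> pedges G" "e' = fe e" using surjE by blast
      hence "fv (psrc G e) = fv v" using inc e' by auto
      hence "psrc G e = v" using injv ends e v by (meson inj_on_eq_iff)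
      thus "e' \<in> fe ` {e \<in> pedges G. psrc G e = v}" using e by blast
    qed
  qed
  moreover have "inj_on fe {e \<in> pedges G. psrc G e = v}" using inje by (rule inj_on_subset) auto
  ultimately show ?thesis unfolding outdeg_def by (simp add: card_image)
qed

lemma boundaryp: "v \<in> pverts G \<Longrightarrow> boundary H (fv v) \<longleftrightarrow> boundary G v"
  unfolding boundary_def degree_def using indegp outdegp fvV by auto

lemma outp: "e \<in> pedges G \<Longrightarrow> fe e \<in> outputs H \<longleftrightarrow> e \<in> outputs G"
  unfolding outputs_def using inc boundaryp ends feE by auto
lemma inp: "e \<in> pedges G \<Longrightarrow> fe e \<in> inputs H \<longleftrightarrow> e \<in> inputs G"
  unfolding inputs_def using inc boundaryp ends feE by auto

lemma out_img: "fe ` outputs G = outputs H"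
proof
  show "fe ` outputs G \<subseteq> outputs H" using outp unfolding outputs_def by auto
  show "outputs H \<subseteq> fe ` outputs G"
  proof
    fix e' assume e': "e' \<in> outputs H"
    then obtain e where "e \<in> pedges G" "e' = fe e" using surjE unfolding outputs_def by blast
    thus "e' \<in> fe ` outputs G" using outp e' by blast
  qed
qed
lemma in_img: "fe ` inputs G = inputs H"
proof
  show "fe ` inputs G \<subseteq> inputs H" using inp unfolding inputs_def by auto
  show "inputs H \<subseteq> fe ` inputs G"
  proof
    fix e' assume e': "e' \<in> inputs H"
    then obtain e where "e \<in> pedges G" "e' = fe e" using surjE unfolding inputs_def by blast
    thus "e' \<in> fe ` inputs G" using inp e' by blast
  qed
qed

lemma card_out: "card (outputs H) = card (outputs G)"
proof -
  have "inj_on fe (outputs G)" using inje by (rule inj_on_subset) (auto simp: outputs_def)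
  thus ?thesis using out_img card_image by metis
qed
lemma card_in: "card (inputs H) = card (inputs G)"
proof -
  have "inj_on fe (inputs G)" using inje by (rule inj_on_subset) (auto simp: inputs_def)
  thus ?thesis using in_img card_image by metis
qed

lemma rankp_gen:
  assumes S: "S \<subseteq> pedges G" and e: "e \<in> pedges G"
  shows "rank H (fe ` S) (fe e) = rank G S e"
proof -
  have "{y \<in> fe ` S. pprec H y (fe e)} = fe ` {y \<in> S. pprec G y e}"
    using ordp S e by auto
  moreover have "inj_on fe {y \<in> S. pprec G y e}" using inje by (rule inj_on_subset) (use S in auto)
  ultimately show ?thesis unfolding rank_def by (simp add: card_image)
qed

lemma rank_out: "e \<in> pedges G \<Longrightarrow> rank H (outputs H) (fe e) = rank G (outputs G) e"
  using rankp_gen[of "outputs G" e] out_img by (auto simp: outputs_def)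
lemma rank_in: "e \<in> pedges G \<Longrightarrow> rank H (inputs H) (fe e) = rank G (inputs G) e"
  using rankp_gen[of "inputs G" e] in_img by (auto simp: inputs_def)

end

lemma pop_isoE:
  assumes "pop_iso G H" "\<forall>e\<in>pedges G. psrc G e \<in> pverts G \<and> ptgt G e \<in> pverts G"
  obtains fv fe where "isom G H fv fe"
  using assms unfolding pop_iso_def isom_def by blast




lemma verts_cover:
  assumes pG: "progressive G" and v: "v \<in> pverts G"
  shows "(\<exists>e\<in>pedges G. psrc G e = v) \<or> (\<exists>e\<in>pedges G. ptgt G e = v)"
proof (cases "indeg G v = 0")
  case True
  hence "degree G v = 1" using pG v unfolding progressive_def by blast
  hence "outdeg G v \<noteq> 0" using True unfolding degree_def by simp
  hence "{e \<in> pedges G. psrc G e = v} \<noteq> {}" unfolding outdeg_def by (metis card.empty)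
  thus ?thesis by blast
next
  case False
  hence "{e \<in> pedges G. ptgt G e = v} \<noteq> {}" unfolding indeg_def by (metis card.empty)
  thus ?thesis by blast
qed

lemma iso_from_edges:
  assumes pG: "progressive G" and pH: "progressive H"
    and be: "bij_betw fe (pedges G) (pedges H)"
    and ss: "\<forall>e\<in>pedges G. \<forall>d\<in>pedges G. psrc G e = psrc G d \<longleftrightarrow> psrc H (fe e) = psrc H (fe d)"
    and tt: "\<forall>e\<in>pedges G. \<forall>d\<in>pedges G. ptgt G e = ptgt G d \<longleftrightarrow> ptgt H (fe e) = ptgt H (fe d)"
    and ts: "\<forall>e\<in>pedges G. \<forall>d\<in>pedges G. ptgt G e = psrc G d \<longleftrightarrow> ptgt H (fe e) = psrc H (fe d)"
    and ord: "\<forall>e\<in>pedges G. \<forall>d\<in>pedges G. pprec G e d \<longleftrightarrow> pprec H (fe e) (fe d)"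
  shows "pop_iso G H"
proof -
  define fv where "fv v = (if \<exists>e\<in>pedges G. psrc G e = v
      then psrc H (fe (SOME e. e \<in> pedges G \<and> psrc G e = v))
      else ptgt H (fe (SOME e. e \<in> pedges G \<and> ptgt G e = v)))" for v
  have fsrc: "fv (psrc G e) = psrc H (fe e)" if e: "e \<in> pedges G" for e
  proof -
    let ?e = "SOME d. d \<in> pedges G \<and> psrc G d = psrc G e"
    have "?e \<in> pedges G \<and> psrc G ?e = psrc G e" by (rule someI[of _ e]) (use e in simp)
    moreover have "fv (psrc G e) = psrc H (fe ?e)" unfolding fv_def using e by auto
    ultimately show ?thesis using ss e by metis
  qed
  have ftgt: "fv (ptgt G e) = ptgt H (fe e)" if e: "e \<in> pedges G" for e
  proof (cases "\<exists>d\<in>pedges G. psrc G d = ptgt G e")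
    case True
    let ?e = "SOME d. d \<in> pedges G \<and> psrc G d = ptgt G e"
    have "?e \<in> pedges G \<and> psrc G ?e = ptgt G e" using someI_ex[of "\<lambda>d. d \<in> pedges G \<and> psrc G d = ptgt G e"] True by blast
    moreover have "fv (ptgt G e) = psrc H (fe ?e)" unfolding fv_def using True by auto
    ultimately show ?thesis using ts e by metis
  next
    case False
    let ?e = "SOME d. d \<in> pedges G \<and> ptgt G d = ptgt G e"
    have "?e \<in> pedges G \<and> ptgt G ?e = ptgt G e" by (rule someI[of _ e]) (use e in simp)
    moreover have "fv (ptgt G e) = ptgt H (fe ?e)" unfolding fv_def using False by auto
    ultimately show ?thesis using tt e by metis
  qed
  have feE: "\<And>e. e \<in> pedges G \<Longrightarrow> fe e \<in> pedges H" using be by (meson bij_betwE)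
  have surjE: "\<And>e'. e' \<in> pedges H \<Longrightarrow> \<exists>e\<in>pedges G. e' = fe e" using be by (metis bij_betw_def imageE)
  have inj: "inj_on fv (pverts G)"
  proof
    fix v w assume v: "v \<in> pverts G" and w: "w \<in> pverts G" and eq: "fv v = fv w"
    consider (s) e where "e \<in> pedges G" "v = psrc G e" | (t) e where "e \<in> pedges G" "v = ptgt G e"
      using verts_cover[OF pG v] by metis
    note cv = this
    consider (s) d where "d \<in> pedges G" "w = psrc G d" | (t) d where "d \<in> pedges G" "w = ptgt G d"
      using verts_cover[OF pG w] by metis
    note cw = this
    show "v = w"
    proof (cases rule: cv)
      case (s e)
      show ?thesis
      proof (cases rule: cw)
        case (s d) thus ?thesis using \<open>e \<in> pedges G\<close> \<open>v = psrc G e\<close> eq fsrc ss by metis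
      next
        case (t d) thus ?thesis using \<open>e \<in> pedges G\<close> \<open>v = psrc G e\<close> eq fsrc ftgt ts by metis
      qed
    next
      case (t e)
      show ?thesis
      proof (cases rule: cw)
        case (s d) thus ?thesis using \<open>e \<in> pedges G\<close> \<open>v = ptgt G e\<close> eq fsrc ftgt ts by metis
      next
        case (t d) thus ?thesis using \<open>e \<in> pedges G\<close> \<open>v = ptgt G e\<close> eq ftgt tt by metis
      qed
    qed
  qed
  have img: "fv ` pverts G = pverts H"
  proof
    show "fv ` pverts G \<subseteq> pverts H"
    proof
      fix w assume "w \<in> fv ` pverts G"
      then obtain v where v: "v \<in> pverts G" "w = fv v" by blast
      show "w \<in> pverts H"
        using verts_cover[OF pG v(1)] v fsrc ftgt feE prog_ends[OF pH] by metis
    qed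
    show "pverts H \<subseteq> fv ` pverts G"
    proof
      fix w assume w: "w \<in> pverts H"
      show "w \<in> fv ` pverts G"
        using verts_cover[OF pH w] surjE fsrc ftgt prog_ends[OF pG] by (metis image_eqI)
    qed
  qed
  show ?thesis unfolding pop_iso_def
    using inj img be fsrc ftgt ord unfolding bij_betw_def by metis
qed




fun pi1 :: "('e1, 'e2) cedge \<Rightarrow> 'e1" where
  "pi1 (Inl (Inl e)) = e" | "pi1 (Inr (oe, i)) = oe" | "pi1 (Inl (Inr e)) = undefined"
fun pi2 :: "('e1, 'e2) cedge \<Rightarrow> 'e2" where
  "pi2 (Inl (Inr e)) = e" | "pi2 (Inr (oe, i)) = i" | "pi2 (Inl (Inl e)) = undefined"

lemma cedge_cases:
  fixes x :: "('e1, 'e2) cedge"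
  obtains (Q) e where "x = Inl (Inl e)" | (P) e where "x = Inl (Inr e)" | (N) a b where "x = Inr (a, b)"
  by (metis sum.exhaust surj_pair)

lemma comp_keylex: "comp_key G1 G2 x \<noteq> comp_key G1 G2 y \<Longrightarrow>
   (comp_prec G1 G2 x y \<longleftrightarrow> comp_key G1 G2 x < comp_key G1 G2 y)"
  by (cases x rule: cedge_cases; cases y rule: cedge_cases) auto

lemma mod3_1[simp]: "Suc (3 * m) mod 3 = 1" by presburger
lemma mod3_2[simp]: "Suc (Suc (3 * m)) mod 3 = 2" by presburger

locale cmp =
  fixes G1 :: "('v1, 'e1) pop" and G2 :: "('v2, 'e2) pop"
  assumes pg1: "pop_graph G1" and pg2: "pop_graph G2" and cp: "composable G1 G2"
begin

abbreviation "C \<equiv> pop_comp G2 G1"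
abbreviation "key \<equiv> comp_key G1 G2"
abbreviation "n \<equiv> card (outputs G1)"
abbreviation "ro \<equiv> rank G1 (outputs G1)"
abbreviation "ri \<equiv> rank G2 (inputs G2)"

definition "M = {(oe, i). oe \<in> outputs G1 \<and> i \<in> inputs G2 \<and> ro oe = ri i}"

lemma pr1: "progressive G1" and po1: "planar_order G1" and pr2: "progressive G2"
  and po2: "planar_order G2"
  using pg1 pg2 unfolding pop_graph_def by auto
lemma fin1: "finite (pedges G1)" using prog_fin[OF pr1] .
lemma fin2: "finite (pedges G2)" using prog_fin[OF pr2] .
lemma out_sub: "outputs G1 \<subseteq> pedges G1" unfolding outputs_def by auto
lemma in_sub: "inputs G2 \<subseteq> pedges G2" unfolding inputs_def by auto
lemma card_in2: "card (inputs G2) = n" using cp unfolding composable_def by simp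

lemma EC: "pedges C = Inl ` Inl ` (pedges G1 - outputs G1) \<union> Inl ` Inr ` (pedges G2 - inputs G2) \<union> Inr ` M"
  unfolding pop_comp_def M_def by simp
lemma VC: "pverts C = Inl ` (pverts G1 - sinks G1) \<union> Inr ` (pverts G2 - sources G2)"
  unfolding pop_comp_def by simp
lemma srcC[simp]: "psrc C = comp_src G1 G2" unfolding pop_comp_def by simp
lemma tgtC[simp]: "ptgt C = comp_tgt G1 G2" unfolding pop_comp_def by simp
lemma precC[simp]: "pprec C = comp_prec G1 G2" unfolding pop_comp_def by simp

lemma EC_cases:
  assumes "x \<in> pedges C"
  obtains (Q) e where "x = Inl (Inl e)" "e \<in> pedges G1" "e \<notin> outputs G1"
    | (P) e where "x = Inl (Inr e)" "e \<in> pedges G2" "e \<notin> inputs G2"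
    | (N) oe i where "x = Inr (oe, i)" "oe \<in> outputs G1" "i \<in> inputs G2" "ro oe = ri i"
  using assms unfolding EC M_def by blast

lemma inQ: "e \<in> pedges G1 \<Longrightarrow> e \<notin> outputs G1 \<Longrightarrow> Inl (Inl e) \<in> pedges C" unfolding EC by blast
lemma inP: "e \<in> pedges G2 \<Longrightarrow> e \<notin> inputs G2 \<Longrightarrow> Inl (Inr e) \<in> pedges C" unfolding EC by blast
lemma inN: "oe \<in> outputs G1 \<Longrightarrow> i \<in> inputs G2 \<Longrightarrow> ro oe = ri i \<Longrightarrow> Inr (oe, i) \<in> pedges C"
  unfolding EC M_def by blast
lemma QinC: "Inl (Inl e) \<in> pedges C \<Longrightarrow> e \<in> pedges G1 \<and> e \<notin> outputs G1" unfolding EC by blast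
lemma PinC: "Inl (Inr e) \<in> pedges C \<Longrightarrow> e \<in> pedges G2 \<and> e \<notin> inputs G2" unfolding EC by blast
lemma NinC: "Inr (oe, i) \<in> pedges C \<Longrightarrow> oe \<in> outputs G1 \<and> i \<in> inputs G2 \<and> ro oe = ri i"
  unfolding EC M_def by blast

lemma finC: "finite (pedges C)" unfolding EC M_def
proof -
  have "M \<subseteq> outputs G1 \<times> inputs G2" unfolding M_def by auto
  moreover have "finite (outputs G1 \<times> inputs G2)" using fin1 fin2 out_sub in_sub
    by (meson finite_SigmaI finite_subset)
  ultimately have "finite M" by (rule finite_subset)
  thus "finite (Inl ` Inl ` (pedges G1 - outputs G1) \<union> Inl ` Inr ` (pedges G2 - inputs G2) \<union>
    Inr ` {(oe, i). oe \<in> outputs G1 \<and> i \<in> inputs G2 \<and> ro oe = ri i})"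
    using fin1 fin2 unfolding M_def by simp
qed

lemma ro_bij: "bij_betw ro (outputs G1) {..<n}" by (rule rank_bij[OF po1 fin1 out_sub])
lemma ri_bij: "bij_betw ri (inputs G2) {..<n}" using rank_bij[OF po2 fin2 in_sub] card_in2 by simp

lemma ro_inj: "oe \<in> outputs G1 \<Longrightarrow> oe' \<in> outputs G1 \<Longrightarrow> ro oe = ro oe' \<Longrightarrow> oe = oe'"
  using ro_bij unfolding bij_betw_def by (meson inj_on_eq_iff)
lemma ri_inj: "i \<in> inputs G2 \<Longrightarrow> i' \<in> inputs G2 \<Longrightarrow> ri i = ri i' \<Longrightarrow> i = i'"
  using ri_bij unfolding bij_betw_def by (meson inj_on_eq_iff)
lemma ro_lt_out: "oe \<in> outputs G1 \<Longrightarrow> ro oe < n" using ro_bij by (meson bij_betwE lessThan_iff)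
lemma ri_lt_in: "i \<in> inputs G2 \<Longrightarrow> ri i < n" using ri_bij by (meson bij_betwE lessThan_iff)
lemma ro_ex: "j < n \<Longrightarrow> \<exists>oe\<in>outputs G1. ro oe = j"
  using ro_bij unfolding bij_betw_def by (metis imageE lessThan_iff)
lemma ri_ex: "j < n \<Longrightarrow> \<exists>i\<in>inputs G2. ri i = j"
  using ri_bij unfolding bij_betw_def by (metis imageE lessThan_iff)

lemma ro_lt: assumes e: "e \<in> pedges G1" "e \<notin> outputs G1" shows "ro e < n"
proof -
  obtain oe where oe: "oe \<in> outputs G1" "reach G1 e oe" using reach_some_output[OF pg1 e] by blast
  have oeE: "oe \<in> pedges G1" using oe out_sub by blast
  have "pprec G1 e oe" using po_reach[OF po1 e(1) oeE oe(2)] .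
  hence "ro e \<le> ro oe" by (rule rank_mono[OF po1 fin1 out_sub e(1) oeE])
  thus ?thesis using ro_lt_out[OF oe(1)] by linarith
qed

lemma ri_pos: assumes d: "d \<in> pedges G2" "d \<notin> inputs G2" shows "1 \<le> ri d"
proof -
  obtain i where i: "i \<in> inputs G2" "reach G2 i d" using reached_some_input[OF pg2 d] by blast
  have iE: "i \<in> pedges G2" using i in_sub by blast
  have "pprec G2 i d" using po_reach[OF po2 iE d(1) i(2)] .
  hence "ri i < ri d" using rank_less_iff[OF po2 fin2 in_sub i(1) d(1)] by blast
  thus ?thesis by linarith
qed

lemma ri_le: assumes d: "d \<in> pedges G2" shows "ri d \<le> n"
proof -
  have "{z \<in> inputs G2. pprec G2 z d} \<subseteq> inputs G2" by blast
  moreover have "finite (inputs G2)" using fin2 in_sub finite_subset by blast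
  ultimately show ?thesis unfolding rank_def using card_in2 by (metis card_mono)
qed

lemma key_bound: assumes x: "x \<in> pedges C" shows "key x < 3 * n"
  using x
proof (cases rule: EC_cases)
  case (Q e) thus ?thesis using ro_lt by simp
next
  case (P e)
  have "1 \<le> ri e" "ri e \<le> n" using ri_pos[OF P(2,3)] ri_le[OF P(2)] by auto
  thus ?thesis using P(1) by simp
next
  case (N oe i)
  have "ro oe < n" using ro_lt_out[OF N(2)] .
  thus ?thesis using N(1) by simp
qed

lemma key_mod0: "x \<in> pedges C \<Longrightarrow> key x mod 3 = 0 \<longleftrightarrow> (\<exists>e. x = Inl (Inl e))"
  by (erule EC_cases) auto
lemma key_mod1: "x \<in> pedges C \<Longrightarrow> key x mod 3 = 1 \<longleftrightarrow> (\<exists>oe i. x = Inr (oe, i))"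
  by (erule EC_cases) auto
lemma key_mod2: "x \<in> pedges C \<Longrightarrow> key x mod 3 = 2 \<longleftrightarrow> (\<exists>e. x = Inl (Inr e))"
  by (erule EC_cases) auto

lemma new_uniq: assumes x: "x \<in> pedges C" and y: "y \<in> pedges C" and eq: "key x = key y"
  and m: "key x mod 3 = 1" shows "x = y"
proof -
  obtain oe i where xi: "x = Inr (oe, i)" using key_mod1[OF x] m by blast
  obtain oe' i' where yi: "y = Inr (oe', i')" using key_mod1[OF y] m eq by metis
  have a: "oe \<in> outputs G1" "i \<in> inputs G2" "ro oe = ri i" using NinC x xi by auto
  have b: "oe' \<in> outputs G1" "i' \<in> inputs G2" "ro oe' = ri i'" using NinC y yi by auto
  have "ro oe = ro oe'" using eq xi yi by simp
  hence "oe = oe'" using ro_inj a b by blast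
  moreover have "i = i'" using ri_inj a b \<open>ro oe = ro oe'\<close> by metis
  ultimately show ?thesis using xi yi by simp
qed

lemma new_ex: assumes j: "j < n" shows "\<exists>x\<in>pedges C. key x = 3 * j + 1"
proof -
  obtain oe where oe: "oe \<in> outputs G1" "ro oe = j" using ro_ex[OF j] by blast
  obtain i where i: "i \<in> inputs G2" "ri i = j" using ri_ex[OF j] by blast
  have "Inr (oe, i) \<in> pedges C" using inN oe i by simp
  moreover have "key (Inr (oe, i)) = 3 * j + 1" using oe by simp
  ultimately show ?thesis by blast
qed

lemma endsC: assumes x: "x \<in> pedges C" shows "psrc C x \<in> pverts C \<and> ptgt C x \<in> pverts C"
  using x
proof (cases rule: EC_cases)
  case (Q e) thus ?thesis unfolding VC
    using prog_ends[OF pr1 Q(2)] src_not_sink[OF pr1 Q(2)] tgt_not_sink[OF pr1 Q(2,3)] by auto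
next
  case (P e) thus ?thesis unfolding VC
    using prog_ends[OF pr2 P(2)] tgt_not_source[OF pr2 P(2)] src_not_source[OF pr2 P(2,3)] by auto
next
  case (N oe i)
  have "oe \<in> pedges G1" "i \<in> pedges G2" using N out_sub in_sub by auto
  thus ?thesis unfolding VC using N prog_ends[OF pr1] prog_ends[OF pr2] src_not_sink[OF pr1]
      tgt_not_source[OF pr2] by auto
qed

end




context cmp
begin

lemma reach_to_output:
  assumes e: "e \<in> pedges G1" "e \<notin> outputs G1" and oe: "oe \<in> outputs G1" and r: "ro oe = ro e"
  shows "reach G1 e oe"
proof -
  obtain o' where o': "o' \<in> outputs G1" "reach G1 e o'" using reach_some_output[OF pg1 e] by blast
  have o'E: "o' \<in> pedges G1" and oeE: "oe \<in> pedges G1" using o' oe out_sub by auto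
  have eo': "pprec G1 e o'" using po_reach[OF po1 e(1) o'E o'(2)] .
  have "oe \<noteq> e" using e oe by blast
  moreover have "\<not> pprec G1 oe e" using rank_less_iff[OF po1 fin1 out_sub oe e(1)] r by simp
  ultimately have eoe: "pprec G1 e oe" using po_total[OF po1 e(1) oeE] by blast
  show ?thesis
  proof (cases "o' = oe")
    case True thus ?thesis using o' by simp
  next
    case False
    hence "ro o' \<noteq> ro oe" using ro_inj o' oe by blast
    moreover have "ro e \<le> ro o'" by (rule rank_mono[OF po1 fin1 out_sub e(1) o'E eo'])
    ultimately have "ro oe < ro o'" using r by linarith
    hence oeo': "pprec G1 oe o'" using rank_less_iff[OF po1 fin1 out_sub oe o'E] by blast
    have "reach G1 e oe \<or> reach G1 oe o'" by (rule po_P2[OF po1 e(1) oeE o'E eoe oeo' o'(2)])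
    moreover have "\<not> reach G1 oe o'"
    proof
      assume "reach G1 oe o'"
      hence "(oe, o') \<in> (edge_step G1)\<^sup>+" unfolding reach_def by blast
      hence "oe \<notin> outputs G1" by (rule trancl_not_output[OF pr1])
      thus False using oe by blast
    qed
    ultimately show ?thesis by blast
  qed
qed

lemma reach_from_input:
  assumes d: "d \<in> pedges G2" "d \<notin> inputs G2" and i: "i \<in> inputs G2" and r: "ri i + 1 = ri d"
  shows "reach G2 i d"
proof -
  obtain i' where i': "i' \<in> inputs G2" "reach G2 i' d" using reached_some_input[OF pg2 d] by blast
  have i'E: "i' \<in> pedges G2" and iE: "i \<in> pedges G2" using i' i in_sub by auto
  have i'd: "pprec G2 i' d" using po_reach[OF po2 i'E d(1) i'(2)] .
  hence ri'd: "ri i' < ri d" using rank_less_iff[OF po2 fin2 in_sub i'(1) d(1)] by blast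
  have id: "pprec G2 i d" using rank_less_iff[OF po2 fin2 in_sub i d(1)] r by simp
  show ?thesis
  proof (cases "i' = i")
    case True thus ?thesis using i' by simp
  next
    case False
    hence "ri i' \<noteq> ri i" using ri_inj i' i by blast
    hence "ri i' < ri i" using ri'd r by linarith
    hence i'i: "pprec G2 i' i" using rank_less_iff[OF po2 fin2 in_sub i'(1) iE] by blast
    have "reach G2 i' i \<or> reach G2 i d" by (rule po_P2[OF po2 i'E iE d(1) i'i id i'(2)])
    moreover have "\<not> reach G2 i' i"
    proof
      assume "reach G2 i' i"
      hence "(i', i) \<in> (edge_step G2)\<^sup>+" unfolding reach_def by blast
      hence "i \<notin> inputs G2" by (rule trancl_not_input[OF pr2])
      thus False using i by blast
    qed
    ultimately show ?thesis by blast
  qed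
qed

lemma stepQ: assumes ab: "(a, b) \<in> edge_step G1" and b: "b \<notin> outputs G1"
  shows "(Inl (Inl a), Inl (Inl b)) \<in> edge_step C"
proof -
  have ab': "a \<in> pedges G1" "b \<in> pedges G1" "ptgt G1 a = psrc G1 b" using step_D[OF ab] by auto
  have "a \<notin> outputs G1" using output_no_out[OF pr1 _ ab'(2)] ab'(3) by metis
  thus ?thesis using inQ ab' b by (intro step_I) auto
qed

lemma liftQ: "(a, b) \<in> (edge_step G1)\<^sup>+ \<Longrightarrow> b \<notin> outputs G1 \<Longrightarrow>
    (Inl (Inl a), Inl (Inl b)) \<in> (edge_step C)\<^sup>+"
proof (induction rule: trancl_induct)
  case (base b) thus ?case using stepQ by blast
next
  case (step b c)
  have bc: "b \<in> pedges G1" "c \<in> pedges G1" "ptgt G1 b = psrc G1 c" using step_D[OF step(2)] by auto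
  have "b \<notin> outputs G1" using output_no_out[OF pr1 _ bc(2)] bc(3) by metis
  hence "(Inl (Inl a), Inl (Inl b)) \<in> (edge_step C)\<^sup>+" using step.IH by blast
  moreover have "(Inl (Inl b), Inl (Inl c)) \<in> edge_step C" using stepQ step by blast
  ultimately show ?case by (rule trancl_into_trancl)
qed

lemma stepP: assumes ab: "(a, b) \<in> edge_step G2" and a: "a \<notin> inputs G2"
  shows "(Inl (Inr a), Inl (Inr b)) \<in> edge_step C"
proof -
  have ab': "a \<in> pedges G2" "b \<in> pedges G2" "ptgt G2 a = psrc G2 b" using step_D[OF ab] by auto
  have "b \<notin> inputs G2" using input_no_in[OF pr2 _ ab'(1)] ab'(3) by metis
  thus ?thesis using inP ab' a by (intro step_I) auto
qed

lemma liftP: "(a, b) \<in> (edge_step G2)\<^sup>+ \<Longrightarrow> a \<notin> inputs G2 \<Longrightarrow>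
    (Inl (Inr a), Inl (Inr b)) \<in> (edge_step C)\<^sup>+"
proof (induction rule: trancl_induct)
  case (base b) thus ?case using stepP by blast
next
  case (step b c)
  have "b \<notin> inputs G2" using trancl_not_input[OF pr2 step(1)] .
  hence "(Inl (Inr b), Inl (Inr c)) \<in> edge_step C" using stepP step(2) by blast
  thus ?case using step.IH step.prems by (meson trancl_into_trancl)
qed

lemma R1: assumes x: "x \<in> pedges C" and y: "y \<in> pedges C" and k: "key y + 1 = key x"
  and m: "key y mod 3 = 0" shows "reach C y x"
proof -
  obtain e where ye: "y = Inl (Inl e)" using key_mod0[OF y] m by blast
  have e: "e \<in> pedges G1" "e \<notin> outputs G1" using QinC y ye by auto
  have "key x mod 3 = 1" using k m by presburger
  then obtain oe i where xe: "x = Inr (oe, i)" using key_mod1[OF x] by blast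
  have oe: "oe \<in> outputs G1" "i \<in> inputs G2" using NinC x xe by auto
  have "ro oe = ro e" using k xe ye by simp
  hence "reach G1 e oe" using reach_to_output e oe by blast
  hence eo: "(e, oe) \<in> (edge_step G1)\<^sup>+" unfolding reach_def by blast
  then obtain c where c: "(e, c) \<in> (edge_step G1)\<^sup>*" "(c, oe) \<in> edge_step G1" by (meson tranclD2)
  have cc: "c \<in> pedges G1" "ptgt G1 c = psrc G1 oe" using step_D[OF c(2)] by auto
  have "c \<notin> outputs G1" using output_no_out[OF pr1 _ ] oe out_sub cc by (metis subsetD)
  have st: "(Inl (Inl c), x) \<in> edge_step C"
    using inQ[OF cc(1) \<open>c \<notin> outputs G1\<close>] x xe cc by (intro step_I) auto
  have "(y, x) \<in> (edge_step C)\<^sup>+"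
  proof (cases "e = c")
    case True thus ?thesis using st ye by auto
  next
    case False
    hence "(e, c) \<in> (edge_step G1)\<^sup>+" using c(1) by (meson rtranclD)
    hence "(Inl (Inl e), Inl (Inl c)) \<in> (edge_step C)\<^sup>+" using liftQ \<open>c \<notin> outputs G1\<close> by blast
    thus ?thesis using st ye by (meson trancl_into_trancl)
  qed
  moreover have "y \<noteq> x" using xe ye by simp
  ultimately show ?thesis unfolding reach_def by blast
qed

lemma R2: assumes x: "x \<in> pedges C" and y: "y \<in> pedges C" and k: "key x + 1 = key y"
  and m: "key x mod 3 = 1" shows "reach C x y"
proof -
  obtain oe i where xe: "x = Inr (oe, i)" using key_mod1[OF x] m by blast
  have oe: "oe \<in> outputs G1" "i \<in> inputs G2" "ro oe = ri i" using NinC x xe by auto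
  have "key y mod 3 = 2" using k m by presburger
  then obtain d where yd: "y = Inl (Inr d)" using key_mod2[OF y] by blast
  have d: "d \<in> pedges G2" "d \<notin> inputs G2" using PinC y yd by auto
  have "1 \<le> ri d" using ri_pos[OF d] .
  hence "ri i + 1 = ri d" using k xe yd oe(3) by simp
  hence "reach G2 i d" using reach_from_input d oe by blast
  hence "(i, d) \<in> (edge_step G2)\<^sup>+" unfolding reach_def by blast
  then obtain c where c: "(i, c) \<in> edge_step G2" "(c, d) \<in> (edge_step G2)\<^sup>*" by (meson tranclD)
  have cc: "c \<in> pedges G2" "ptgt G2 i = psrc G2 c" using step_D[OF c(1)] by auto
  have "c \<notin> inputs G2" using input_no_in[OF pr2 _] oe in_sub cc by (metis subsetD)
  have st: "(x, Inl (Inr c)) \<in> edge_step C"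
    using inP[OF cc(1) \<open>c \<notin> inputs G2\<close>] x xe cc by (intro step_I) auto
  have "(x, y) \<in> (edge_step C)\<^sup>+"
  proof (cases "c = d")
    case True thus ?thesis using st yd by auto
  next
    case False
    hence "(c, d) \<in> (edge_step G2)\<^sup>+" using c(2) by (meson rtranclD)
    hence "(Inl (Inr c), Inl (Inr d)) \<in> (edge_step C)\<^sup>+" using liftP \<open>c \<notin> inputs G2\<close> by blast
    thus ?thesis using st yd by (meson trancl_into_trancl2)
  qed
  moreover have "y \<noteq> x" using xe yd by simp
  ultimately show ?thesis unfolding reach_def by blast
qed

lemma src_Inr: "psrc C y \<in> range Inr \<Longrightarrow> \<exists>e. y = Inl (Inr e)"
  by (cases y rule: cedge_cases) auto
lemma tgt_Inl: "ptgt C y \<in> range Inl \<Longrightarrow> \<exists>e. y = Inl (Inl e)"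
  by (cases y rule: cedge_cases) auto

lemma R3: assumes r: "reach C x y" and m: "key x mod 3 = 1" shows "key y mod 3 = 2"
proof -
  have t: "(x, y) \<in> (edge_step C)\<^sup>+" using r unfolding reach_def by blast
  have xy: "x \<in> pedges C" "y \<in> pedges C" using trancl_edges[OF t] by auto
  obtain oe i where xe: "x = Inr (oe, i)" using key_mod1[OF xy(1)] m by blast
  have "ptgt C x \<in> range Inr" using xe by simp
  hence "\<exists>e. y = Inl (Inr e)" using t
  proof (induction rule: trancl_induct[OF t])
    case (1 y) thus ?case using step_D[OF 1(1)] src_Inr by metis
  next
    case (2 y z)
    obtain e where "y = Inl (Inr e)" using 2 by blast
    hence "ptgt C y \<in> range Inr" by simp
    thus ?case using step_D[OF 2(2)] src_Inr by metis
  qed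
  thus ?thesis using key_mod2[OF xy(2)] by blast
qed

lemma R3': assumes r: "reach C y x" and m: "key x mod 3 = 1" shows "key y mod 3 = 0"
proof -
  have t: "(y, x) \<in> (edge_step C)\<^sup>+" using r unfolding reach_def by blast
  have xy: "x \<in> pedges C" "y \<in> pedges C" using trancl_edges[OF t] by auto
  obtain oe i where xe: "x = Inr (oe, i)" using key_mod1[OF xy(1)] m by blast
  have px: "psrc C x \<in> range Inl" using xe by simp
  have "\<exists>e. y = Inl (Inl e)" using t px
  proof (induction rule: converse_trancl_induct)
    case (base y) thus ?case using step_D[OF base(1)] tgt_Inl by metis
  next
    case (step y z)
    obtain e where "z = Inl (Inl e)" using step by blast
    hence "psrc C z \<in> range Inl" by simp
    thus ?case using step_D[OF step(1)] tgt_Inl by metis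
  qed
  thus ?thesis using key_mod0[OF xy(2)] by auto
qed

lemma cntQ: "card {x \<in> pedges C. key x = 3 * j} = card {e \<in> pedges G1. e \<notin> outputs G1 \<and> ro e = j}"
proof -
  have "{x \<in> pedges C. key x = 3 * j} = (Inl \<circ> Inl) ` {e \<in> pedges G1. e \<notin> outputs G1 \<and> ro e = j}"
  proof
    show "{x \<in> pedges C. key x = 3 * j} \<subseteq> (Inl \<circ> Inl) ` {e \<in> pedges G1. e \<notin> outputs G1 \<and> ro e = j}"
    proof
      fix x assume x: "x \<in> {x \<in> pedges C. key x = 3 * j}"
      hence xm: "key x mod 3 = 0" and xC: "x \<in> pedges C" by simp_all
      obtain e where xe: "x = Inl (Inl e)" using key_mod0[OF xC] xm by blast
      thus "x \<in> (Inl \<circ> Inl) ` {e \<in> pedges G1. e \<notin> outputs G1 \<and> ro e = j}" using x QinC by auto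
    qed
    show "(Inl \<circ> Inl) ` {e \<in> pedges G1. e \<notin> outputs G1 \<and> ro e = j} \<subseteq> {x \<in> pedges C. key x = 3 * j}"
      using inQ by auto
  qed
  moreover have "inj_on (\<lambda>x. Inl (Inl x) :: ('e1, 'e2) cedge) A" for A by (simp add: inj_on_def)
  ultimately show ?thesis by (simp add: card_image)
qed

lemma cntP: "card {x \<in> pedges C. key x = 3 * j + 2} = card {e \<in> pedges G2. e \<notin> inputs G2 \<and> ri e - 1 = j}"
proof -
  have "{x \<in> pedges C. key x = 3 * j + 2} = (Inl \<circ> Inr) ` {e \<in> pedges G2. e \<notin> inputs G2 \<and> ri e - 1 = j}"
  proof
    show "{x \<in> pedges C. key x = 3 * j + 2} \<subseteq> (Inl \<circ> Inr) ` {e \<in> pedges G2. e \<notin> inputs G2 \<and> ri e - 1 = j}"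
    proof
      fix x assume x: "x \<in> {x \<in> pedges C. key x = 3 * j + 2}"
      hence xm: "key x mod 3 = 2" and xC: "x \<in> pedges C" by simp_all
      obtain e where xe: "x = Inl (Inr e)" using key_mod2[OF xC] xm by blast
      thus "x \<in> (Inl \<circ> Inr) ` {e \<in> pedges G2. e \<notin> inputs G2 \<and> ri e - 1 = j}" using x PinC by auto
    qed
    show "(Inl \<circ> Inr) ` {e \<in> pedges G2. e \<notin> inputs G2 \<and> ri e - 1 = j} \<subseteq> {x \<in> pedges C. key x = 3 * j + 2}"
      using inP by auto
  qed
  moreover have "inj_on (\<lambda>x. Inl (Inr x) :: ('e1, 'e2) cedge) A" for A by (simp add: inj_on_def)
  ultimately show ?thesis by (simp add: card_image)
qed

end




context cmp
begin

definition "P2s = {x \<in> pedges C. key x mod 3 \<noteq> 0}"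
definition "P1s = {x \<in> pedges C. key x mod 3 \<noteq> 2}"

lemma P2s_cases:
  assumes "x \<in> P2s"
  obtains (P) e where "x = Inl (Inr e)" "e \<in> pedges G2" "e \<notin> inputs G2"
    | (N) oe i where "x = Inr (oe, i)" "oe \<in> outputs G1" "i \<in> inputs G2" "ro oe = ri i"
  using assms unfolding P2s_def by (auto elim: EC_cases)

lemma P1s_cases:
  assumes "x \<in> P1s"
  obtains (Q) e where "x = Inl (Inl e)" "e \<in> pedges G1" "e \<notin> outputs G1"
    | (N) oe i where "x = Inr (oe, i)" "oe \<in> outputs G1" "i \<in> inputs G2" "ro oe = ri i"
  using assms unfolding P1s_def by (auto elim: EC_cases)

lemma pi2_bij: "bij_betw pi2 P2s (pedges G2)"
proof -
  have inj: "inj_on pi2 P2s"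
  proof
    fix x y assume x: "x \<in> P2s" and y: "y \<in> P2s" and eq: "pi2 x = pi2 y"
    show "x = y"
      using x
    proof (cases rule: P2s_cases)
      case (P e)
      show ?thesis using y
      proof (cases rule: P2s_cases)
        case (P e') thus ?thesis using \<open>x = Inl (Inr e)\<close> eq by simp
      next
        case (N oe' i') thus ?thesis using \<open>x = Inl (Inr e)\<close> \<open>e \<notin> inputs G2\<close> eq by simp
      qed
    next
      case (N oe i)
      note X = N
      show ?thesis using y
      proof (cases rule: P2s_cases)
        case (P e') thus ?thesis using X eq by simp
      next
        case (N oe' i')
        note N2 = this
        have "i = i'" using X N2 eq by simp
        hence "oe = oe'" using X N2 ro_inj by metis
        thus ?thesis using X N2 \<open>i = i'\<close> by simp
      qed
    qed
  qed
  have img: "pi2 ` P2s = pedges G2"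
  proof
    show "pi2 ` P2s \<subseteq> pedges G2"
    proof
      fix d assume "d \<in> pi2 ` P2s"
      then obtain x where x: "x \<in> P2s" "d = pi2 x" by blast
      show "d \<in> pedges G2" using x(1) by (cases rule: P2s_cases) (use x in_sub in auto)
    qed
    show "pedges G2 \<subseteq> pi2 ` P2s"
    proof
      fix d assume d: "d \<in> pedges G2"
      show "d \<in> pi2 ` P2s"
      proof (cases "d \<in> inputs G2")
        case True
        obtain oe where oe: "oe \<in> outputs G1" "ro oe = ri d" using ro_ex ri_lt_in[OF True] by blast
        have "Inr (oe, d) \<in> P2s" unfolding P2s_def using inN[OF oe(1) True oe(2)] by simp
        moreover have "pi2 (Inr (oe, d)) = d" by simp
        ultimately show ?thesis by (metis image_eqI)
      next
        case False
        have "Inl (Inr d) \<in> P2s" unfolding P2s_def using inP[OF d False] by simp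
        moreover have "pi2 (Inl (Inr d)) = d" by simp
        ultimately show ?thesis by (metis image_eqI)
      qed
    qed
  qed
  show ?thesis using inj img unfolding bij_betw_def by simp
qed

lemma pi1_bij: "bij_betw pi1 P1s (pedges G1)"
proof -
  have inj: "inj_on pi1 P1s"
  proof
    fix x y assume x: "x \<in> P1s" and y: "y \<in> P1s" and eq: "pi1 x = pi1 y"
    show "x = y"
      using x
    proof (cases rule: P1s_cases)
      case (Q e)
      show ?thesis using y
      proof (cases rule: P1s_cases)
        case (Q e') thus ?thesis using \<open>x = Inl (Inl e)\<close> eq by simp
      next
        case (N oe' i') thus ?thesis using \<open>x = Inl (Inl e)\<close> \<open>e \<notin> outputs G1\<close> eq by simp
      qed
    next
      case (N oe i)
      note X = N
      show ?thesis using y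
      proof (cases rule: P1s_cases)
        case (Q e') thus ?thesis using X eq by simp
      next
        case (N oe' i')
        note N2 = this
        have "oe = oe'" using X N2 eq by simp
        hence "i = i'" using X N2 ri_inj by metis
        thus ?thesis using X N2 \<open>oe = oe'\<close> by simp
      qed
    qed
  qed
  have img: "pi1 ` P1s = pedges G1"
  proof
    show "pi1 ` P1s \<subseteq> pedges G1"
    proof
      fix d assume "d \<in> pi1 ` P1s"
      then obtain x where x: "x \<in> P1s" "d = pi1 x" by blast
      show "d \<in> pedges G1" using x(1) by (cases rule: P1s_cases) (use x out_sub in auto)
    qed
    show "pedges G1 \<subseteq> pi1 ` P1s"
    proof
      fix d assume d: "d \<in> pedges G1"
      show "d \<in> pi1 ` P1s"
      proof (cases "d \<in> outputs G1")
        case True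
        obtain i where i: "i \<in> inputs G2" "ri i = ro d" using ri_ex ro_lt_out[OF True] by blast
        have "Inr (d, i) \<in> P1s" unfolding P1s_def using inN[OF True i(1)] i(2) by simp
        moreover have "pi1 (Inr (d, i)) = d" by simp
        ultimately show ?thesis by (metis image_eqI)
      next
        case False
        have "Inl (Inl d) \<in> P1s" unfolding P1s_def using inQ[OF d False] by simp
        moreover have "pi1 (Inl (Inl d)) = d" by simp
        ultimately show ?thesis by (metis image_eqI)
      qed
    qed
  qed
  show ?thesis using inj img unfolding bij_betw_def by simp
qed

lemma pi2_tgt: "x \<in> P2s \<Longrightarrow> ptgt C x = Inr (ptgt G2 (pi2 x))"
  by (erule P2s_cases) auto
lemma pi2_in: "x \<in> P2s \<Longrightarrow> pi2 x \<in> inputs G2 \<longleftrightarrow> key x mod 3 = 1"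
  by (erule P2s_cases) auto
lemma pi2_src: "x \<in> P2s \<Longrightarrow> key x mod 3 \<noteq> 1 \<Longrightarrow> psrc C x = Inr (psrc G2 (pi2 x))"
  by (erule P2s_cases) auto
lemma pi1_src: "x \<in> P1s \<Longrightarrow> psrc C x = Inl (psrc G1 (pi1 x))"
  by (erule P1s_cases) auto
lemma pi1_out: "x \<in> P1s \<Longrightarrow> pi1 x \<in> outputs G1 \<longleftrightarrow> key x mod 3 = 1"
  by (erule P1s_cases) auto
lemma pi1_tgt: "x \<in> P1s \<Longrightarrow> key x mod 3 \<noteq> 1 \<Longrightarrow> ptgt C x = Inl (ptgt G1 (pi1 x))"
  by (erule P1s_cases) auto

lemma pi2_prec: assumes x: "x \<in> P2s" and y: "y \<in> P2s"
  shows "pprec C x y \<longleftrightarrow> pprec G2 (pi2 x) (pi2 y)"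
  using x
proof (cases rule: P2s_cases)
  case (P e)
  note X = P
  have re: "1 \<le> ri e" using ri_pos[OF P(2,3)] .
  show ?thesis using y
  proof (cases rule: P2s_cases)
    case (P e')
    note P2 = this
    have re': "1 \<le> ri e'" using ri_pos[OF P2(2,3)] .
    have "pprec G2 e e' \<longleftrightarrow> (ri e < ri e' \<or> (ri e = ri e' \<and> pprec G2 e e'))"
      using rank_mono[OF po2 fin2 in_sub X(2) P2(2)] rank_less_imp[OF po2 fin2 in_sub X(2) P2(2)]
      by auto
    thus ?thesis using X P2 re re' by auto
  next
    case (N oe i)
    have iE: "i \<in> pedges G2" using N in_sub by auto
    have "e \<noteq> i" using P N by auto
    have "pprec G2 e i \<longleftrightarrow> \<not> pprec G2 i e"
      using po_total[OF po2 P(2) iE \<open>e \<noteq> i\<close>] po_trans[OF po2 P(2) iE P(2)] po_irrefl[OF po2 P(2)]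
      by blast
    also have "\<dots> \<longleftrightarrow> \<not> ri i < ri e" using rank_less_iff[OF po2 fin2 in_sub N(3) P(2)] by simp
    finally have "pprec G2 e i \<longleftrightarrow> ri e \<le> ri i" by linarith
    thus ?thesis using P N re by auto
  qed
next
  case (N oe i)
  note X = N
  show ?thesis using y
  proof (cases rule: P2s_cases)
    case (P e')
    have re': "1 \<le> ri e'" using ri_pos[OF P(2,3)] .
    have "pprec G2 i e' \<longleftrightarrow> ri i < ri e'" using rank_less_iff[OF po2 fin2 in_sub X(3) P(2)] .
    thus ?thesis using P X re' by auto
  next
    case (N oe' i')
    note N2 = this
    have "i' \<in> pedges G2" using N2 in_sub by auto
    hence "pprec G2 i i' \<longleftrightarrow> ri i < ri i'" using rank_less_iff[OF po2 fin2 in_sub X(3)] by blast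
    thus ?thesis using X N2 by auto
  qed
qed

lemma pi1_prec: assumes x: "x \<in> P1s" and y: "y \<in> P1s"
  shows "pprec C x y \<longleftrightarrow> pprec G1 (pi1 x) (pi1 y)"
  using x
proof (cases rule: P1s_cases)
  case (Q e)
  note X = Q
  show ?thesis using y
  proof (cases rule: P1s_cases)
    case (Q e')
    note Q2 = this
    have "pprec G1 e e' \<longleftrightarrow> (ro e < ro e' \<or> (ro e = ro e' \<and> pprec G1 e e'))"
      using rank_mono[OF po1 fin1 out_sub X(2) Q2(2)] rank_less_imp[OF po1 fin1 out_sub X(2) Q2(2)]
      by auto
    thus ?thesis using X Q2 by auto
  next
    case (N oe i)
    have oE: "oe \<in> pedges G1" using N out_sub by auto
    have "e \<noteq> oe" using Q N by auto
    have "pprec G1 e oe \<longleftrightarrow> \<not> pprec G1 oe e"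
      using po_total[OF po1 Q(2) oE \<open>e \<noteq> oe\<close>] po_trans[OF po1 Q(2) oE Q(2)] po_irrefl[OF po1 Q(2)]
      by blast
    also have "\<dots> \<longleftrightarrow> \<not> ro oe < ro e" using rank_less_iff[OF po1 fin1 out_sub N(2) Q(2)] by simp
    finally have "pprec G1 e oe \<longleftrightarrow> ro e \<le> ro oe" by linarith
    thus ?thesis using Q N by auto
  qed
next
  case (N oe i)
  note X = N
  show ?thesis using y
  proof (cases rule: P1s_cases)
    case (Q e')
    have "pprec G1 oe e' \<longleftrightarrow> ro oe < ro e'" using rank_less_iff[OF po1 fin1 out_sub X(2) Q(2)] .
    thus ?thesis using Q X by auto
  next
    case (N oe' i')
    note N2 = this
    have "oe' \<in> pedges G1" using N2 out_sub by auto
    hence "pprec G1 oe oe' \<longleftrightarrow> ro oe < ro oe'" using rank_less_iff[OF po1 fin1 out_sub X(2)] by blast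
    thus ?thesis using X N2 by auto
  qed
qed

end




lemma ar1: "(a::nat) + k = 3*m + 2 \<Longrightarrow> a mod 3 = 1 \<longleftrightarrow> k mod 3 = 1" by presburger
lemma ar2: "(a::nat) + k = 3*m + 2 \<Longrightarrow> a mod 3 = 2 \<longleftrightarrow> k mod 3 = 0" by presburger
lemma ar3a: "(a::nat) + k = 3*m + 2 \<Longrightarrow> a = 3*j \<Longrightarrow> j \<le> m" by presburger
lemma ar3: assumes "(a::nat) + k = 3*m + 2" shows "a = 3*j \<longleftrightarrow> (j \<le> m \<and> k = 3*(m-j)+2)"
proof
  assume a: "a = 3*j"
  have jm: "j \<le> m" using ar3a assms a by blast
  have "3*(m-j) = 3*m - 3*j" by (simp add: diff_mult_distrib2)
  moreover have "3*j \<le> 3*m" using jm by simp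
  ultimately show "j \<le> m \<and> k = 3*(m-j)+2" using assms a jm by linarith
next
  assume h: "j \<le> m \<and> k = 3*(m-j)+2"
  have "3*(m-j) = 3*m - 3*j" by (simp add: diff_mult_distrib2)
  moreover have "3*j \<le> 3*m" using h by simp
  ultimately show "a = 3*j" using assms h by linarith
qed

context isom
begin
lemma tt_tr: "x \<in> pedges G \<Longrightarrow> y \<in> pedges G \<Longrightarrow> ptgt H (fe x) = ptgt H (fe y) \<longleftrightarrow> ptgt G x = ptgt G y"
  using inc ends injv by (metis inj_on_eq_iff)
lemma ss_tr: "x \<in> pedges G \<Longrightarrow> y \<in> pedges G \<Longrightarrow> psrc H (fe x) = psrc H (fe y) \<longleftrightarrow> psrc G x = psrc G y"
  using inc ends injv by (metis inj_on_eq_iff)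
lemma ts_tr: "x \<in> pedges G \<Longrightarrow> y \<in> pedges G \<Longrightarrow> ptgt H (fe x) = psrc H (fe y) \<longleftrightarrow> ptgt G x = psrc G y"
  using inc ends injv by (metis inj_on_eq_iff)

lemma card_tr: assumes "\<forall>e\<in>pedges G. Q (fe e) \<longleftrightarrow> P e"
  shows "card {e' \<in> pedges H. Q e'} = card {e \<in> pedges G. P e}"
proof -
  have "{e' \<in> pedges H. Q e'} = fe ` {e \<in> pedges G. P e}"
  proof
    show "fe ` {e \<in> pedges G. P e} \<subseteq> {e' \<in> pedges H. Q e'}" using assms feE by auto
    show "{e' \<in> pedges H. Q e'} \<subseteq> fe ` {e \<in> pedges G. P e}"
    proof
      fix e' assume e': "e' \<in> {e' \<in> pedges H. Q e'}"
      then obtain e where e: "e \<in> pedges G" "e' = fe e" using surjE by blast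
      thus "e' \<in> fe ` {e \<in> pedges G. P e}" using assms e' by blast
    qed
  qed
  moreover have "inj_on fe {e \<in> pedges G. P e}" using inje by (rule inj_on_subset) auto
  ultimately show ?thesis by (simp add: card_image)
qed
end

context cmp
begin

definition "rkey x = 3 * n - 1 - key x"

lemma rk_sum: assumes x: "x \<in> pedges C" shows "rkey x + key x = 3 * (n - 1) + 2"
proof -
  have kb: "key x < 3 * n" using key_bound[OF x] .
  then obtain m where m: "n = Suc m" by (cases n) auto
  show ?thesis using kb unfolding rkey_def m by simp
qed

lemma rk_lex: assumes x: "x \<in> pedges C" and y: "y \<in> pedges C"
  shows "rkey x \<noteq> rkey y \<longrightarrow> (pprec C y x \<longleftrightarrow> rkey x < rkey y)"
  using rk_sum[OF x] rk_sum[OF y] comp_keylex[of G1 G2 y x] by auto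

lemma rk_bd: "x \<in> pedges C \<Longrightarrow> rkey x < 3 * n"
  using rk_sum[of x] key_bound[of x] by linarith

lemma rk_new: assumes x: "x \<in> pedges C" and y: "y \<in> pedges C" and eq: "rkey x = rkey y"
  and m: "rkey x mod 3 = 1" shows "x = y"
proof -
  have "key x = key y" using rk_sum[OF x] rk_sum[OF y] eq by linarith
  moreover have "key x mod 3 = 1" using ar1[OF rk_sum[OF x]] m by simp
  ultimately show ?thesis using new_uniq x y by blast
qed

lemma rk_new_ex: assumes j: "j < n" shows "\<exists>x\<in>pedges C. rkey x = 3 * j + 1"
proof -
  obtain x where x: "x \<in> pedges C" "key x = 3 * (n - 1 - j) + 1" using new_ex[of "n - 1 - j"] j by auto
  have "rkey x = 3 * j + 1" using rk_sum[OF x(1)] x(2) j by (simp add: diff_mult_distrib2)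
  thus ?thesis using x by blast
qed

lemma rk_cnt: "card {x \<in> pedges C. rkey x = 3 * j} =
   (if j < n then card {e \<in> pedges G2. e \<notin> inputs G2 \<and> ri e - 1 = n - 1 - j} else 0)"
proof -
  have eq: "{x \<in> pedges C. rkey x = 3 * j} = {x \<in> pedges C. j < n \<and> key x = 3 * (n - 1 - j) + 2}"
  proof -
    have "rkey x = 3 * j \<longleftrightarrow> j < n \<and> key x = 3 * (n - 1 - j) + 2" if x: "x \<in> pedges C" for x
    proof -
      have "n \<ge> 1" using key_bound[OF x] by linarith
      thus ?thesis using ar3[OF rk_sum[OF x], of j] by auto
    qed
    thus ?thesis by blast
  qed
  show ?thesis
  proof (cases "j < n")
    case True thus ?thesis using eq cntP[of "n - 1 - j"] by simp
  next
    case False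
    have e0: "{x \<in> pedges C. rkey x = 3 * j} = {}" using eq False by auto
    show ?thesis unfolding e0 using False by simp
  qed
qed

lemma rk_rP: assumes x: "x \<in> pedges C" and y: "y \<in> pedges C"
  shows "rkey x + 1 = rkey y \<longrightarrow> rkey x mod 3 = 1 \<longrightarrow> reach C y x"
proof (intro impI)
  assume a: "rkey x + 1 = rkey y" and b: "rkey x mod 3 = 1"
  have "key x mod 3 = 1" using ar1[OF rk_sum[OF x]] b by simp
  moreover have "key y + 1 = key x" using rk_sum[OF x] rk_sum[OF y] a by linarith
  moreover have "key y mod 3 = 0" using calculation by presburger
  ultimately show "reach C y x" using R1[OF x y, of] by (metis)
qed

lemma rk_rN: assumes x: "x \<in> pedges C" and y: "y \<in> pedges C"
  shows "reach C y x \<longrightarrow> rkey x mod 3 = 1 \<longrightarrow> rkey y mod 3 = 2"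
proof (intro impI)
  assume a: "reach C y x" and b: "rkey x mod 3 = 1"
  have "key x mod 3 = 1" using ar1[OF rk_sum[OF x]] b by simp
  hence "key y mod 3 = 0" using R3'[OF a] by blast
  thus "rkey y mod 3 = 2" using ar2[OF rk_sum[OF y]] by simp
qed

lemma src_eq_input: assumes u: "u \<in> P2s" and v: "v \<in> P2s" and m: "key u mod 3 = 1"
  shows "psrc G2 (pi2 u) = psrc G2 (pi2 v) \<longleftrightarrow> u = v"
proof
  assume eq: "psrc G2 (pi2 u) = psrc G2 (pi2 v)"
  have "pi2 u \<in> inputs G2" using pi2_in[OF u] m by simp
  moreover have "pi2 v \<in> pedges G2" using pi2_bij v by (meson bij_betwE)
  ultimately have "pi2 v = pi2 u" using input_src_uniq[OF pr2] eq by metis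
  thus "u = v" using pi2_bij u v unfolding bij_betw_def by (metis inj_on_eq_iff)
qed simp

lemma ts_input: assumes u: "u \<in> P2s" and v: "v \<in> P2s" and m: "key v mod 3 = 1"
  shows "ptgt G2 (pi2 u) \<noteq> psrc G2 (pi2 v)"
proof -
  have "pi2 v \<in> inputs G2" using pi2_in[OF v] m by simp
  moreover have "pi2 u \<in> pedges G2" using pi2_bij u by (meson bij_betwE)
  ultimately show ?thesis using input_no_in[OF pr2] by blast
qed

lemma tgt_eq_output: assumes u: "u \<in> P1s" and v: "v \<in> P1s" and m: "key u mod 3 = 1"
  shows "ptgt G1 (pi1 u) = ptgt G1 (pi1 v) \<longleftrightarrow> u = v"
proof
  assume eq: "ptgt G1 (pi1 u) = ptgt G1 (pi1 v)"
  have "pi1 u \<in> outputs G1" using pi1_out[OF u] m by simp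
  moreover have "pi1 v \<in> pedges G1" using pi1_bij v by (meson bij_betwE)
  ultimately have "pi1 v = pi1 u" using output_tgt_uniq[OF pr1] eq by metis
  thus "u = v" using pi1_bij u v unfolding bij_betw_def by (metis inj_on_eq_iff)
qed simp

lemma ts_output: assumes u: "u \<in> P1s" and v: "v \<in> P1s" and m: "key u mod 3 = 1"
  shows "ptgt G1 (pi1 u) \<noteq> psrc G1 (pi1 v)"
proof -
  have "pi1 u \<in> outputs G1" using pi1_out[OF u] m by simp
  moreover have "pi1 v \<in> pedges G1" using pi1_bij v by (meson bij_betwE)
  ultimately show ?thesis using output_no_out[OF pr1] by metis
qed

end




locale pair = A: cmp G1 G2 + B: cmp G1' G2'
  for G1 :: "('v1, 'e1) pop" and G2 :: "('v2, 'e2) pop"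
    and G1' :: "('v3, 'e3) pop" and G2' :: "('v4, 'e4) pop" +
  fixes fv fe
  assumes iso: "isom (pop_comp G2 G1) (pop_comp G2' G1') fv fe"
begin

sublocale I: isom "pop_comp G2 G1" "pop_comp G2' G1'" fv fe by (rule iso)

lemma keys_fwd:
  assumes nn: "B.n = A.n"
    and cnt: "\<forall>j. card {e \<in> pedges G1. e \<notin> outputs G1 \<and> A.ro e = j}
                 = card {e \<in> pedges G1'. e \<notin> outputs G1' \<and> B.ro e = j}"
  shows "\<forall>x\<in>pedges A.C. B.key (fe x) = A.key x"
proof (rule keys_agree[where lt = "pprec A.C" and lt' = "pprec B.C" and R = "reach A.C"
      and R' = "reach B.C" and n = A.n])
  show "finite (pedges A.C)" by (rule A.finC)
  show "finite (pedges B.C)" by (rule B.finC)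
  show "bij_betw fe (pedges A.C) (pedges B.C)" by (rule I.be)
  show "\<forall>x\<in>pedges A.C. \<forall>y\<in>pedges A.C. pprec B.C (fe x) (fe y) \<longleftrightarrow> pprec A.C x y"
    using I.ordp by blast
  show "\<forall>x\<in>pedges A.C. \<forall>y\<in>pedges A.C. A.key x \<noteq> A.key y \<longrightarrow> (pprec A.C x y \<longleftrightarrow> A.key x < A.key y)"
    by (simp add: comp_keylex)
  show "\<forall>x\<in>pedges B.C. \<forall>y\<in>pedges B.C. B.key x \<noteq> B.key y \<longrightarrow> (pprec B.C x y \<longleftrightarrow> B.key x < B.key y)"
    by (simp add: comp_keylex)
  show "\<forall>x\<in>pedges A.C. A.key x < 3 * A.n" using A.key_bound by blast
  show "\<forall>x\<in>pedges B.C. B.key x < 3 * A.n" using B.key_bound nn by simp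
  show "\<forall>x\<in>pedges A.C. \<forall>y\<in>pedges A.C. A.key x = A.key y \<longrightarrow> A.key x mod 3 = 1 \<longrightarrow> x = y"
    using A.new_uniq by blast
  show "\<forall>x\<in>pedges B.C. \<forall>y\<in>pedges B.C. B.key x = B.key y \<longrightarrow> B.key x mod 3 = 1 \<longrightarrow> x = y"
    using B.new_uniq by blast
  show "\<forall>j<A.n. \<exists>x\<in>pedges A.C. A.key x = 3 * j + 1" using A.new_ex by blast
  show "\<forall>j<A.n. \<exists>x\<in>pedges B.C. B.key x = 3 * j + 1" using B.new_ex nn by simp
  show "\<forall>j. card {x \<in> pedges A.C. A.key x = 3 * j} = card {x \<in> pedges B.C. B.key x = 3 * j}"
    using A.cntQ B.cntQ cnt by simp
  show "\<forall>x\<in>pedges A.C. \<forall>y\<in>pedges A.C. A.key x + 1 = A.key y \<longrightarrow> A.key x mod 3 = 1 \<longrightarrow> reach A.C x y"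
    using A.R2 by blast
  show "\<forall>x\<in>pedges B.C. \<forall>y\<in>pedges B.C. B.key x + 1 = B.key y \<longrightarrow> B.key x mod 3 = 1 \<longrightarrow> reach B.C x y"
    using B.R2 by blast
  show "\<forall>x\<in>pedges A.C. \<forall>y\<in>pedges A.C. reach A.C x y \<longrightarrow> A.key x mod 3 = 1 \<longrightarrow> A.key y mod 3 = 2"
    using A.R3 by blast
  show "\<forall>x\<in>pedges B.C. \<forall>y\<in>pedges B.C. reach B.C x y \<longrightarrow> B.key x mod 3 = 1 \<longrightarrow> B.key y mod 3 = 2"
    using B.R3 by blast
  show "\<forall>x\<in>pedges A.C. \<forall>y\<in>pedges A.C. reach B.C (fe x) (fe y) \<longleftrightarrow> reach A.C x y"
    using I.reachp by blast
qed

lemma keys_bwd: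
  assumes nn: "B.n = A.n"
    and cnt: "\<forall>j. card {e \<in> pedges G2. e \<notin> inputs G2 \<and> A.ri e - 1 = j}
                 = card {e \<in> pedges G2'. e \<notin> inputs G2' \<and> B.ri e - 1 = j}"
  shows "\<forall>x\<in>pedges A.C. B.key (fe x) = A.key x"
proof -
  have rk: "\<forall>x\<in>pedges A.C. B.rkey (fe x) = A.rkey x"
  proof (rule keys_agree[where lt = "\<lambda>a b. pprec A.C b a" and lt' = "\<lambda>a b. pprec B.C b a"
      and R = "\<lambda>a b. reach A.C b a" and R' = "\<lambda>a b. reach B.C b a" and n = A.n])
    show "finite (pedges A.C)" by (rule A.finC)
    show "finite (pedges B.C)" by (rule B.finC)
    show "bij_betw fe (pedges A.C) (pedges B.C)" by (rule I.be)
    show "\<forall>x\<in>pedges A.C. \<forall>y\<in>pedges A.C. pprec B.C (fe y) (fe x) \<longleftrightarrow> pprec A.C y x"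
      using I.ordp by blast
    show "\<forall>x\<in>pedges A.C. \<forall>y\<in>pedges A.C. A.rkey x \<noteq> A.rkey y \<longrightarrow> (pprec A.C y x \<longleftrightarrow> A.rkey x < A.rkey y)"
      using A.rk_lex by blast
    show "\<forall>x\<in>pedges B.C. \<forall>y\<in>pedges B.C. B.rkey x \<noteq> B.rkey y \<longrightarrow> (pprec B.C y x \<longleftrightarrow> B.rkey x < B.rkey y)"
      using B.rk_lex by blast
    show "\<forall>x\<in>pedges A.C. A.rkey x < 3 * A.n" using A.rk_bd by blast
    show "\<forall>x\<in>pedges B.C. B.rkey x < 3 * A.n" using B.rk_bd nn by simp
    show "\<forall>x\<in>pedges A.C. \<forall>y\<in>pedges A.C. A.rkey x = A.rkey y \<longrightarrow> A.rkey x mod 3 = 1 \<longrightarrow> x = y"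
      using A.rk_new by blast
    show "\<forall>x\<in>pedges B.C. \<forall>y\<in>pedges B.C. B.rkey x = B.rkey y \<longrightarrow> B.rkey x mod 3 = 1 \<longrightarrow> x = y"
      using B.rk_new by blast
    show "\<forall>j<A.n. \<exists>x\<in>pedges A.C. A.rkey x = 3 * j + 1" using A.rk_new_ex by blast
    show "\<forall>j<A.n. \<exists>x\<in>pedges B.C. B.rkey x = 3 * j + 1" using B.rk_new_ex nn by simp
    show "\<forall>j. card {x \<in> pedges A.C. A.rkey x = 3 * j} = card {x \<in> pedges B.C. B.rkey x = 3 * j}"
      using A.rk_cnt B.rk_cnt cnt nn by simp
    show "\<forall>x\<in>pedges A.C. \<forall>y\<in>pedges A.C. A.rkey x + 1 = A.rkey y \<longrightarrow> A.rkey x mod 3 = 1 \<longrightarrow> reach A.C y x"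
      using A.rk_rP by blast
    show "\<forall>x\<in>pedges B.C. \<forall>y\<in>pedges B.C. B.rkey x + 1 = B.rkey y \<longrightarrow> B.rkey x mod 3 = 1 \<longrightarrow> reach B.C y x"
      using B.rk_rP by blast
    show "\<forall>x\<in>pedges A.C. \<forall>y\<in>pedges A.C. reach A.C y x \<longrightarrow> A.rkey x mod 3 = 1 \<longrightarrow> A.rkey y mod 3 = 2"
      using A.rk_rN by blast
    show "\<forall>x\<in>pedges B.C. \<forall>y\<in>pedges B.C. reach B.C y x \<longrightarrow> B.rkey x mod 3 = 1 \<longrightarrow> B.rkey y mod 3 = 2"
      using B.rk_rN by blast
    show "\<forall>x\<in>pedges A.C. \<forall>y\<in>pedges A.C. reach B.C (fe y) (fe x) \<longleftrightarrow> reach A.C y x"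
      using I.reachp by blast
  qed
  show ?thesis
  proof
    fix x assume x: "x \<in> pedges A.C"
    have "fe x \<in> pedges B.C" using I.feE x .
    thus "B.key (fe x) = A.key x" using rk x A.rk_sum[OF x] B.rk_sum nn by fastforce
  qed
qed

end




context pair
begin

lemma iso2:
  assumes K: "\<forall>x\<in>pedges A.C. B.key (fe x) = A.key x"
  shows "pop_iso G2 G2'"
proof -
  have phiP: "bij_betw fe A.P2s B.P2s"
  proof (rule bij_betw_subset[OF I.be])
    show "A.P2s \<subseteq> pedges A.C" unfolding A.P2s_def by blast
    show "fe ` A.P2s = B.P2s"
    proof
      show "fe ` A.P2s \<subseteq> B.P2s" unfolding A.P2s_def B.P2s_def using K I.feE by auto
      show "B.P2s \<subseteq> fe ` A.P2s"
      proof
        fix y assume y: "y \<in> B.P2s"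
        then obtain x where x: "x \<in> pedges A.C" "y = fe x" using I.surjE unfolding B.P2s_def by blast
        hence "x \<in> A.P2s" using y K unfolding A.P2s_def B.P2s_def by auto
        thus "y \<in> fe ` A.P2s" using x by blast
      qed
    qed
  qed
  define g where "g = inv_into A.P2s pi2"
  have gb: "bij_betw g (pedges G2) A.P2s" unfolding g_def by (rule bij_betw_inv_into[OF A.pi2_bij])
  define f2 where "f2 = pi2 \<circ> fe \<circ> g"
  have bij: "bij_betw f2 (pedges G2) (pedges G2')"
    unfolding f2_def using bij_betw_trans[OF gb bij_betw_trans[OF phiP B.pi2_bij]] by (simp add: comp_assoc)
  have gpi: "g (pi2 x) = x" if "x \<in> A.P2s" for x
    unfolding g_def using A.pi2_bij that by (meson bij_betw_inv_into_left)
  have f2pi: "f2 (pi2 x) = pi2 (fe x)" if "x \<in> A.P2s" for x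
    unfolding f2_def using gpi[OF that] by simp
  have repr: "\<exists>x\<in>A.P2s. e = pi2 x" if "e \<in> pedges G2" for e
    using A.pi2_bij that unfolding bij_betw_def by blast
  have feP: "fe x \<in> B.P2s" if "x \<in> A.P2s" for x using phiP that by (meson bij_betwE)
  have PC: "x \<in> pedges A.C" if "x \<in> A.P2s" for x using that unfolding A.P2s_def by blast
  have PC': "x \<in> pedges B.C" if "x \<in> B.P2s" for x using that unfolding B.P2s_def by blast
  have Km: "B.key (fe x) = A.key x" if "x \<in> A.P2s" for x using K PC[OF that] by blast
  have injfe: "fe x = fe y \<longleftrightarrow> x = y" if "x \<in> A.P2s" "y \<in> A.P2s" for x y
    using I.inje PC that by (meson inj_on_eq_iff)
  show ?thesis
  proof (rule iso_from_edges[OF A.pr2 B.pr2 bij])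
    show "\<forall>e\<in>pedges G2. \<forall>d\<in>pedges G2. ptgt G2 e = ptgt G2 d \<longleftrightarrow> ptgt G2' (f2 e) = ptgt G2' (f2 d)"
    proof (intro ballI)
      fix e d assume "e \<in> pedges G2" "d \<in> pedges G2"
      then obtain x y where x: "x \<in> A.P2s" "e = pi2 x" and y: "y \<in> A.P2s" "d = pi2 y" using repr by blast
      have "ptgt G2 e = ptgt G2 d \<longleftrightarrow> ptgt A.C x = ptgt A.C y"
        using A.pi2_tgt[OF x(1)] A.pi2_tgt[OF y(1)] x y by simp
      also have "\<dots> \<longleftrightarrow> ptgt B.C (fe x) = ptgt B.C (fe y)" using I.tt_tr PC x y by blast
      also have "\<dots> \<longleftrightarrow> ptgt G2' (pi2 (fe x)) = ptgt G2' (pi2 (fe y))"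
        using B.pi2_tgt[OF feP[OF x(1)]] B.pi2_tgt[OF feP[OF y(1)]] by simp
      finally show "ptgt G2 e = ptgt G2 d \<longleftrightarrow> ptgt G2' (f2 e) = ptgt G2' (f2 d)"
        using f2pi x y by simp
    qed
    show "\<forall>e\<in>pedges G2. \<forall>d\<in>pedges G2. psrc G2 e = psrc G2 d \<longleftrightarrow> psrc G2' (f2 e) = psrc G2' (f2 d)"
    proof (intro ballI)
      fix e d assume "e \<in> pedges G2" "d \<in> pedges G2"
      then obtain x y where x: "x \<in> A.P2s" "e = pi2 x" and y: "y \<in> A.P2s" "d = pi2 y" using repr by blast
      have goal: "psrc G2 (pi2 x) = psrc G2 (pi2 y) \<longleftrightarrow> psrc G2' (pi2 (fe x)) = psrc G2' (pi2 (fe y))"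
      proof (cases "A.key x mod 3 = 1")
        case True
        have "psrc G2 (pi2 x) = psrc G2 (pi2 y) \<longleftrightarrow> x = y" using A.src_eq_input x y True by blast
        also have "\<dots> \<longleftrightarrow> fe x = fe y" using injfe x y by blast
        also have "\<dots> \<longleftrightarrow> psrc G2' (pi2 (fe x)) = psrc G2' (pi2 (fe y))"
          using B.src_eq_input feP x y True Km by metis
        finally show ?thesis .
      next
        case F1: False
        show ?thesis
        proof (cases "A.key y mod 3 = 1")
          case True
          have "psrc G2 (pi2 y) = psrc G2 (pi2 x) \<longleftrightarrow> y = x" using A.src_eq_input x y True by blast
          also have "\<dots> \<longleftrightarrow> fe y = fe x" using injfe x y by blast
          also have "\<dots> \<longleftrightarrow> psrc G2' (pi2 (fe y)) = psrc G2' (pi2 (fe x))"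
            using B.src_eq_input feP x y True Km by metis
          finally show ?thesis by metis
        next
          case False
          have "psrc G2 (pi2 x) = psrc G2 (pi2 y) \<longleftrightarrow> psrc A.C x = psrc A.C y"
            using A.pi2_src[OF x(1) F1] A.pi2_src[OF y(1) False] by simp
          also have "\<dots> \<longleftrightarrow> psrc B.C (fe x) = psrc B.C (fe y)" using I.ss_tr PC x y by blast
          also have "\<dots> \<longleftrightarrow> psrc G2' (pi2 (fe x)) = psrc G2' (pi2 (fe y))"
            using B.pi2_src[OF feP[OF x(1)]] B.pi2_src[OF feP[OF y(1)]] F1 False Km x y by simp
          finally show ?thesis .
        qed
      qed
      thus "psrc G2 e = psrc G2 d \<longleftrightarrow> psrc G2' (f2 e) = psrc G2' (f2 d)"
        using f2pi x y by simp
    qed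
    show "\<forall>e\<in>pedges G2. \<forall>d\<in>pedges G2. ptgt G2 e = psrc G2 d \<longleftrightarrow> ptgt G2' (f2 e) = psrc G2' (f2 d)"
    proof (intro ballI)
      fix e d assume "e \<in> pedges G2" "d \<in> pedges G2"
      then obtain x y where x: "x \<in> A.P2s" "e = pi2 x" and y: "y \<in> A.P2s" "d = pi2 y" using repr by blast
      have goal: "ptgt G2 (pi2 x) = psrc G2 (pi2 y) \<longleftrightarrow> ptgt G2' (pi2 (fe x)) = psrc G2' (pi2 (fe y))"
      proof (cases "A.key y mod 3 = 1")
        case True
        have "ptgt G2 (pi2 x) \<noteq> psrc G2 (pi2 y)" using A.ts_input x y True by blast
        moreover have "ptgt G2' (pi2 (fe x)) \<noteq> psrc G2' (pi2 (fe y))"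
          using B.ts_input feP x y True Km by metis
        ultimately show ?thesis by blast
      next
        case False
        have "ptgt G2 (pi2 x) = psrc G2 (pi2 y) \<longleftrightarrow> ptgt A.C x = psrc A.C y"
          using A.pi2_tgt[OF x(1)] A.pi2_src[OF y(1) False] by simp
        also have "\<dots> \<longleftrightarrow> ptgt B.C (fe x) = psrc B.C (fe y)" using I.ts_tr PC x y by blast
        also have "\<dots> \<longleftrightarrow> ptgt G2' (pi2 (fe x)) = psrc G2' (pi2 (fe y))"
          using B.pi2_tgt[OF feP[OF x(1)]] B.pi2_src[OF feP[OF y(1)]] False Km x y by simp
        finally show ?thesis .
      qed
      thus "ptgt G2 e = psrc G2 d \<longleftrightarrow> ptgt G2' (f2 e) = psrc G2' (f2 d)"
        using f2pi x y by simp
    qed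
    show "\<forall>e\<in>pedges G2. \<forall>d\<in>pedges G2. pprec G2 e d \<longleftrightarrow> pprec G2' (f2 e) (f2 d)"
    proof (intro ballI)
      fix e d assume "e \<in> pedges G2" "d \<in> pedges G2"
      then obtain x y where x: "x \<in> A.P2s" "e = pi2 x" and y: "y \<in> A.P2s" "d = pi2 y" using repr by blast
      have "pprec G2 (pi2 x) (pi2 y) \<longleftrightarrow> pprec A.C x y" using A.pi2_prec x y by blast
      also have "\<dots> \<longleftrightarrow> pprec B.C (fe x) (fe y)" using I.ordp PC x y by blast
      also have "\<dots> \<longleftrightarrow> pprec G2' (pi2 (fe x)) (pi2 (fe y))" using B.pi2_prec feP x y by blast
      finally show "pprec G2 e d \<longleftrightarrow> pprec G2' (f2 e) (f2 d)" using f2pi x y by simp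
    qed
  qed
qed

lemma iso1:
  assumes K: "\<forall>x\<in>pedges A.C. B.key (fe x) = A.key x"
  shows "pop_iso G1 G1'"
proof -
  have phiP: "bij_betw fe A.P1s B.P1s"
  proof (rule bij_betw_subset[OF I.be])
    show "A.P1s \<subseteq> pedges A.C" unfolding A.P1s_def by blast
    show "fe ` A.P1s = B.P1s"
    proof
      show "fe ` A.P1s \<subseteq> B.P1s" unfolding A.P1s_def B.P1s_def using K I.feE by auto
      show "B.P1s \<subseteq> fe ` A.P1s"
      proof
        fix y assume y: "y \<in> B.P1s"
        then obtain x where x: "x \<in> pedges A.C" "y = fe x" using I.surjE unfolding B.P1s_def by blast
        hence "x \<in> A.P1s" using y K unfolding A.P1s_def B.P1s_def by auto
        thus "y \<in> fe ` A.P1s" using x by blast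
      qed
    qed
  qed
  define g where "g = inv_into A.P1s pi1"
  have gb: "bij_betw g (pedges G1) A.P1s" unfolding g_def by (rule bij_betw_inv_into[OF A.pi1_bij])
  define f1 where "f1 = pi1 \<circ> fe \<circ> g"
  have bij: "bij_betw f1 (pedges G1) (pedges G1')"
    unfolding f1_def using bij_betw_trans[OF gb bij_betw_trans[OF phiP B.pi1_bij]] by (simp add: comp_assoc)
  have gpi: "g (pi1 x) = x" if "x \<in> A.P1s" for x
    unfolding g_def using A.pi1_bij that by (meson bij_betw_inv_into_left)
  have f1pi: "f1 (pi1 x) = pi1 (fe x)" if "x \<in> A.P1s" for x
    unfolding f1_def using gpi[OF that] by simp
  have repr: "\<exists>x\<in>A.P1s. e = pi1 x" if "e \<in> pedges G1" for e
    using A.pi1_bij that unfolding bij_betw_def by blast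
  have feP: "fe x \<in> B.P1s" if "x \<in> A.P1s" for x using phiP that by (meson bij_betwE)
  have PC: "x \<in> pedges A.C" if "x \<in> A.P1s" for x using that unfolding A.P1s_def by blast
  have Km: "B.key (fe x) = A.key x" if "x \<in> A.P1s" for x using K PC[OF that] by blast
  have injfe: "fe x = fe y \<longleftrightarrow> x = y" if "x \<in> A.P1s" "y \<in> A.P1s" for x y
    using I.inje PC that by (meson inj_on_eq_iff)
  show ?thesis
  proof (rule iso_from_edges[OF A.pr1 B.pr1 bij])
    show "\<forall>e\<in>pedges G1. \<forall>d\<in>pedges G1. psrc G1 e = psrc G1 d \<longleftrightarrow> psrc G1' (f1 e) = psrc G1' (f1 d)"
    proof (intro ballI)
      fix e d assume "e \<in> pedges G1" "d \<in> pedges G1"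
      then obtain x y where x: "x \<in> A.P1s" "e = pi1 x" and y: "y \<in> A.P1s" "d = pi1 y" using repr by blast
      have "psrc G1 e = psrc G1 d \<longleftrightarrow> psrc A.C x = psrc A.C y"
        using A.pi1_src[OF x(1)] A.pi1_src[OF y(1)] x y by simp
      also have "\<dots> \<longleftrightarrow> psrc B.C (fe x) = psrc B.C (fe y)" using I.ss_tr PC x y by blast
      also have "\<dots> \<longleftrightarrow> psrc G1' (pi1 (fe x)) = psrc G1' (pi1 (fe y))"
        using B.pi1_src[OF feP[OF x(1)]] B.pi1_src[OF feP[OF y(1)]] by simp
      finally show "psrc G1 e = psrc G1 d \<longleftrightarrow> psrc G1' (f1 e) = psrc G1' (f1 d)"
        using f1pi x y by simp
    qed
    show "\<forall>e\<in>pedges G1. \<forall>d\<in>pedges G1. ptgt G1 e = ptgt G1 d \<longleftrightarrow> ptgt G1' (f1 e) = ptgt G1' (f1 d)"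
    proof (intro ballI)
      fix e d assume "e \<in> pedges G1" "d \<in> pedges G1"
      then obtain x y where x: "x \<in> A.P1s" "e = pi1 x" and y: "y \<in> A.P1s" "d = pi1 y" using repr by blast
      have goal: "ptgt G1 (pi1 x) = ptgt G1 (pi1 y) \<longleftrightarrow> ptgt G1' (pi1 (fe x)) = ptgt G1' (pi1 (fe y))"
      proof (cases "A.key x mod 3 = 1")
        case True
        have "ptgt G1 (pi1 x) = ptgt G1 (pi1 y) \<longleftrightarrow> x = y" using A.tgt_eq_output x y True by blast
        also have "\<dots> \<longleftrightarrow> fe x = fe y" using injfe x y by blast
        also have "\<dots> \<longleftrightarrow> ptgt G1' (pi1 (fe x)) = ptgt G1' (pi1 (fe y))"
          using B.tgt_eq_output feP x y True Km by metis
        finally show ?thesis .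
      next
        case F1: False
        show ?thesis
        proof (cases "A.key y mod 3 = 1")
          case True
          have "ptgt G1 (pi1 y) = ptgt G1 (pi1 x) \<longleftrightarrow> y = x" using A.tgt_eq_output x y True by blast
          also have "\<dots> \<longleftrightarrow> fe y = fe x" using injfe x y by blast
          also have "\<dots> \<longleftrightarrow> ptgt G1' (pi1 (fe y)) = ptgt G1' (pi1 (fe x))"
            using B.tgt_eq_output feP x y True Km by metis
          finally show ?thesis by metis
        next
          case False
          have "ptgt G1 (pi1 x) = ptgt G1 (pi1 y) \<longleftrightarrow> ptgt A.C x = ptgt A.C y"
            using A.pi1_tgt[OF x(1) F1] A.pi1_tgt[OF y(1) False] by simp
          also have "\<dots> \<longleftrightarrow> ptgt B.C (fe x) = ptgt B.C (fe y)" using I.tt_tr PC x y by blast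
          also have "\<dots> \<longleftrightarrow> ptgt G1' (pi1 (fe x)) = ptgt G1' (pi1 (fe y))"
            using B.pi1_tgt[OF feP[OF x(1)]] B.pi1_tgt[OF feP[OF y(1)]] F1 False Km x y by simp
          finally show ?thesis .
        qed
      qed
      thus "ptgt G1 e = ptgt G1 d \<longleftrightarrow> ptgt G1' (f1 e) = ptgt G1' (f1 d)"
        using f1pi x y by simp
    qed
    show "\<forall>e\<in>pedges G1. \<forall>d\<in>pedges G1. ptgt G1 e = psrc G1 d \<longleftrightarrow> ptgt G1' (f1 e) = psrc G1' (f1 d)"
    proof (intro ballI)
      fix e d assume "e \<in> pedges G1" "d \<in> pedges G1"
      then obtain x y where x: "x \<in> A.P1s" "e = pi1 x" and y: "y \<in> A.P1s" "d = pi1 y" using repr by blast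
      have goal: "ptgt G1 (pi1 x) = psrc G1 (pi1 y) \<longleftrightarrow> ptgt G1' (pi1 (fe x)) = psrc G1' (pi1 (fe y))"
      proof (cases "A.key x mod 3 = 1")
        case True
        have "ptgt G1 (pi1 x) \<noteq> psrc G1 (pi1 y)" using A.ts_output x y True by blast
        moreover have "ptgt G1' (pi1 (fe x)) \<noteq> psrc G1' (pi1 (fe y))"
          using B.ts_output feP x y True Km by metis
        ultimately show ?thesis by blast
      next
        case False
        have "ptgt G1 (pi1 x) = psrc G1 (pi1 y) \<longleftrightarrow> ptgt A.C x = psrc A.C y"
          using A.pi1_tgt[OF x(1) False] A.pi1_src[OF y(1)] by simp
        also have "\<dots> \<longleftrightarrow> ptgt B.C (fe x) = psrc B.C (fe y)" using I.ts_tr PC x y by blast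
        also have "\<dots> \<longleftrightarrow> ptgt G1' (pi1 (fe x)) = psrc G1' (pi1 (fe y))"
          using B.pi1_tgt[OF feP[OF x(1)]] B.pi1_src[OF feP[OF y(1)]] False Km x y by simp
        finally show ?thesis .
      qed
      thus "ptgt G1 e = psrc G1 d \<longleftrightarrow> ptgt G1' (f1 e) = psrc G1' (f1 d)"
        using f1pi x y by simp
    qed
    show "\<forall>e\<in>pedges G1. \<forall>d\<in>pedges G1. pprec G1 e d \<longleftrightarrow> pprec G1' (f1 e) (f1 d)"
    proof (intro ballI)
      fix e d assume "e \<in> pedges G1" "d \<in> pedges G1"
      then obtain x y where x: "x \<in> A.P1s" "e = pi1 x" and y: "y \<in> A.P1s" "d = pi1 y" using repr by blast
      have "pprec G1 (pi1 x) (pi1 y) \<longleftrightarrow> pprec A.C x y" using A.pi1_prec x y by blast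
      also have "\<dots> \<longleftrightarrow> pprec B.C (fe x) (fe y)" using I.ordp PC x y by blast
      also have "\<dots> \<longleftrightarrow> pprec G1' (pi1 (fe x)) (pi1 (fe y))" using B.pi1_prec feP x y by blast
      finally show "pprec G1 e d \<longleftrightarrow> pprec G1' (f1 e) (f1 d)" using f1pi x y by simp
    qed
  qed
qed

end

theorem proposition2p3:
  fixes G1 :: "('v1, 'e1) pop" and G2 :: "('v2, 'e2) pop"
    and G1' :: "('v3, 'e3) pop" and G2' :: "('v4, 'e4) pop"
  assumes "pop_graph G1" and "pop_graph G2" and "pop_graph G1'" and "pop_graph G2'"
    and "composable G1 G2" and "composable G1' G2'"
    and "pop_iso (pop_comp G2 G1) (pop_comp G2' G1')"
  shows "(pop_iso G1 G1' \<longrightarrow> pop_iso G2 G2') \<and> (pop_iso G2 G2' \<longrightarrow> pop_iso G1 G1')"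
proof -
  interpret A: cmp G1 G2 using assms(1,2,5) by unfold_locales
  interpret B: cmp G1' G2' using assms(3,4,6) by unfold_locales
  obtain fv fe where iso: "isom (pop_comp G2 G1) (pop_comp G2' G1') fv fe"
    using pop_isoE[OF assms(7)] A.endsC by blast
  have c1: "cmp G1 G2" and c2: "cmp G1' G2'" using assms by (simp_all add: cmp_def)
  interpret P: pair G1 G2 G1' G2' fv fe
    using c1 c2 iso by (simp add: pair_def pair_axioms_def)
  show ?thesis
  proof (intro conjI impI)
    assume h: "pop_iso G1 G1'"
    obtain gv ge where J: "isom G1 G1' gv ge" using pop_isoE[OF h] prog_ends[OF A.pr1] by blast
    interpret J: isom G1 G1' gv ge by (rule J)
    have nn: "B.n = A.n" by (rule J.card_out)
    have cnt: "\<forall>j. card {e \<in> pedges G1. e \<notin> outputs G1 \<and> A.ro e = j}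
                 = card {e \<in> pedges G1'. e \<notin> outputs G1' \<and> B.ro e = j}"
    proof
      fix j
      show "card {e \<in> pedges G1. e \<notin> outputs G1 \<and> A.ro e = j}
                 = card {e \<in> pedges G1'. e \<notin> outputs G1' \<and> B.ro e = j}"
        using J.card_tr[of "\<lambda>e'. e' \<notin> outputs G1' \<and> B.ro e' = j" "\<lambda>e. e \<notin> outputs G1 \<and> A.ro e = j"]
          J.outp J.rank_out by simp
    qed
    show "pop_iso G2 G2'" using P.iso2 P.keys_fwd[OF nn cnt] by blast
  next
    assume h: "pop_iso G2 G2'"
    obtain gv ge where J: "isom G2 G2' gv ge" using pop_isoE[OF h] prog_ends[OF A.pr2] by blast
    interpret J: isom G2 G2' gv ge by (rule J)
    have nn: "B.n = A.n" using J.card_in A.card_in2 B.card_in2 by simp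
    have cnt: "\<forall>j. card {e \<in> pedges G2. e \<notin> inputs G2 \<and> A.ri e - 1 = j}
                 = card {e \<in> pedges G2'. e \<notin> inputs G2' \<and> B.ri e - 1 = j}"
    proof
      fix j
      show "card {e \<in> pedges G2. e \<notin> inputs G2 \<and> A.ri e - 1 = j}
                 = card {e \<in> pedges G2'. e \<notin> inputs G2' \<and> B.ri e - 1 = j}"
        using J.card_tr[of "\<lambda>e'. e' \<notin> inputs G2' \<and> B.ri e' - 1 = j" "\<lambda>e. e \<notin> inputs G2 \<and> A.ri e - 1 = j"]
          J.inp J.rank_in by simp
    qed
    show "pop_iso G1 G1'" using P.iso1 P.keys_bwd[OF nn cnt] by blast
  qed
qed


end
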